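(* Let $X$ be an undirected graph and let $f:Y\to X$, $g:Z\to X$ be objects of $C_X$ such that $Y$ and $Z$ have no loops and, for every $p\ge1$, have finitely many $p$-cycles without backtracking. If there is a morphism $h:Y\to Z$ in $C_X$ (from $f$ to $g$) which is a weak equivalence for the model on $C_X$ defined by counting $R_X=\bigcup_{p\ge1}R^p_X$, then $Y$ and $Z$ have the same Ihara zeta function.
   Context: An undirected graph has nodes $X(0)$, half-arcs $X(1)$, $s,t:X(1)\to X(0)$, and an involution $\iota$ with $s\circ\iota=t$; morphisms commute with $s,t,\iota$. An arc is a pair $\{u,\iota(u)\}$; a loop is an arc whose source and target coincide. $X(x,* )$ is the set of arcs having $x$ as source or target. A morphism $f$ is a covering if for every node $x$ the induced map $X(x,* )\to Y(f_0(x),* )$ is bijective. $C_X$: objects are coverings $Y\to X$; morphisms from $f:Y\to X$ to $g:Z\to X$ are coverings $h:Y\to Z$ with $g\circ h=f$. For $p\ge1$, $c^p_U$ has nodes $\mathbb{Z}/p\mathbb{Z}$ and half-arcs $[n]^\pm$ with $s([n]^+)=[n]$, $t([n]^+)=[n+1]$, $s([n]^-)=[n+1]$, $t([n]^-)=[n]$, $\iota([n]^+)=[n]^-$; a $p$-cycle is a morphism $c^p_U\to Y$, with backtracking if $h_1([n+1]^+)=h_1([n]^-)$ for some $n$. $R^p_X$ is the set of objects $U\to X$ of $C_X$ where $U$ contains a subgraph isomorphic to $c^p_U$ and removing its arcs leaves a forest each of whose trees meets the cycle in exactly one node. A morphism $h$ from $f:Y\to X$ to $g:Z\to X$ in $C_X$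 is a weak equivalence if for every $p\ge1$ and every $U\in R^p_X$, composition with $h$ is a bijection $\mathrm{Hom}_{C_X}(U,Y)\to\mathrm{Hom}_{C_X}(U,Z)$. If $c_p(Y)$ denotes the number of $p$-cycles of $Y$ without backtracking, the Ihara zeta function of $Y$ is $\exp\big(\sum_{p\ge1} c_p(Y)t^p/p\big)$. *)

theory Defs
  imports Main "HOL-Library.FuncSet" "HOL-Computational_Algebra.Formal_Power_Series"
begin

text \<open>Undirected graphs (Serre-style): nodes X(0), half-arcs X(1), source, target and
  an involution on half-arcs with s o iota = t.  Carriers are sets inside ambient types.\<close>

record ('v, 'h) ugraph =
  nodes :: "'v set"
  harcs :: "'h set"
  src   :: "'h \<Rightarrow> 'v"
  tgt   :: "'h \<Rightarrow> 'v"
  inv   :: "'h \<Rightarrow> 'h"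

definition wf_graph :: "('v, 'h) ugraph \<Rightarrow> bool" where
  "wf_graph G \<longleftrightarrow>
     (\<forall>u\<in>harcs G. src G u \<in> nodes G \<and> tgt G u \<in> nodes G \<and> inv G u \<in> harcs G
        \<and> inv G (inv G u) = u \<and> src G (inv G u) = tgt G u)"

definition morphism :: "('v, 'h) ugraph \<Rightarrow> ('w, 'k) ugraph \<Rightarrow> ('v \<Rightarrow> 'w) \<Rightarrow> ('h \<Rightarrow> 'k) \<Rightarrow> bool" where
  "morphism G H f0 f1 \<longleftrightarrow>
     (\<forall>v\<in>nodes G. f0 v \<in> nodes H) \<and>
     (\<forall>u\<in>harcs G. f1 u \<in> harcs H \<and> src H (f1 u) = f0 (src G u)
        \<and> tgt H (f1 u) = f0 (tgt G u) \<and> inv H (f1 u) = f1 (inv G u))"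

text \<open>An arc is a pair {u, iota u}; X(x,*) is the set of arcs having x as source or target.\<close>
definition arcs_at :: "('v, 'h) ugraph \<Rightarrow> 'v \<Rightarrow> 'h set set" where
  "arcs_at G x = {{u, inv G u} | u. u \<in> harcs G \<and> (src G u = x \<or> tgt G u = x)}"

definition has_loop :: "('v, 'h) ugraph \<Rightarrow> bool" where
  "has_loop G \<longleftrightarrow> (\<exists>u\<in>harcs G. src G u = tgt G u)"

definition covering :: "('v, 'h) ugraph \<Rightarrow> ('w, 'k) ugraph \<Rightarrow> ('v \<Rightarrow> 'w) \<Rightarrow> ('h \<Rightarrow> 'k) \<Rightarrow> bool" where
  "covering G H f0 f1 \<longleftrightarrow> morphism G H f0 f1 \<and>
     (\<forall>x\<in>nodes G. bij_betw (\<lambda>A. f1 ` A) (arcs_at G x) (arcs_at H (f0 x)))"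

text \<open>The cycle graph c^p_U: nodes Z/pZ = {0..<p}; half-arc [n]^+ is (n, True),
  [n]^- is (n, False).\<close>
definition cyc :: "nat \<Rightarrow> (nat, nat \<times> bool) ugraph" where
  "cyc p = \<lparr> nodes = {0..<p},
             harcs = {0..<p} \<times> UNIV,
             src = (\<lambda>(n, b). if b then n else Suc n mod p),
             tgt = (\<lambda>(n, b). if b then Suc n mod p else n),
             inv = (\<lambda>(n, b). (n, \<not> b)) \<rparr>"

definition p_cycles :: "nat \<Rightarrow> ('v, 'h) ugraph \<Rightarrow> ((nat \<Rightarrow> 'v) \<times> (nat \<times> bool \<Rightarrow> 'h)) set" where
  "p_cycles p Y = {(h0, h1). h0 \<in> extensional (nodes (cyc p)) \<and> h1 \<in> extensional (harcs (cyc p))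
                        \<and> morphism (cyc p) Y h0 h1}"

definition backtracking :: "nat \<Rightarrow> (nat \<times> bool \<Rightarrow> 'h) \<Rightarrow> bool" where
  "backtracking p h1 \<longleftrightarrow> (\<exists>n<p. h1 (Suc n mod p, True) = h1 (n, False))"

definition nb_cycles :: "nat \<Rightarrow> ('v, 'h) ugraph \<Rightarrow> ((nat \<Rightarrow> 'v) \<times> (nat \<times> bool \<Rightarrow> 'h)) set" where
  "nb_cycles p Y = {c \<in> p_cycles p Y. \<not> backtracking p (snd c)}"

definition cnum :: "('v, 'h) ugraph \<Rightarrow> nat \<Rightarrow> nat" where
  "cnum Y p = card (nb_cycles p Y)"

definition ihara_zeta :: "('v, 'h) ugraph \<Rightarrow> real fps" where
  "ihara_zeta Y = fps_exp 1 oo Abs_fps (\<lambda>p. if p = 0 then 0 else of_nat (cnum Y p) / of_nat p)"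

definition forest :: "('v, 'h) ugraph \<Rightarrow> bool" where
  "forest G \<longleftrightarrow> (\<forall>p\<ge>1. nb_cycles p G = {})"

definition conn :: "('v, 'h) ugraph \<Rightarrow> ('v \<times> 'v) set" where
  "conn G = {(x, y). \<exists>u\<in>harcs G. src G u = x \<and> tgt G u = y}\<^sup>*"

text \<open>R^p_X: coverings U -> X such that U contains a subgraph isomorphic to c^p_U (the image of
  an injective morphism), and removing its arcs leaves a forest each of whose trees
  (connected components) meets the cycle in exactly one node.\<close>
definition in_R :: "nat \<Rightarrow> ('x, 'xh) ugraph \<Rightarrow> ('u, 'uh) ugraph \<Rightarrow> ('u \<Rightarrow> 'x) \<Rightarrow> ('uh \<Rightarrow> 'xh) \<Rightarrow> bool" where
  "in_R p X U u0 u1 \<longleftrightarrow> wf_graph U \<and> covering U X u0 u1 \<and>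
     (\<exists>\<phi>0 \<phi>1. morphism (cyc p) U \<phi>0 \<phi>1 \<and> inj_on \<phi>0 (nodes (cyc p)) \<and> inj_on \<phi>1 (harcs (cyc p)) \<and>
        (let U' = U\<lparr>harcs := harcs U - \<phi>1 ` harcs (cyc p)\<rparr> in
           forest U' \<and> (\<forall>x\<in>nodes U. \<exists>!c. c \<in> \<phi>0 ` nodes (cyc p) \<and> (x, c) \<in> conn U')))"

definition homC :: "('u, 'uh) ugraph \<Rightarrow> ('u \<Rightarrow> 'x) \<Rightarrow> ('uh \<Rightarrow> 'xh) \<Rightarrow> ('y, 'yh) ugraph \<Rightarrow> ('y \<Rightarrow> 'x) \<Rightarrow> ('yh \<Rightarrow> 'xh)
    \<Rightarrow> (('u \<Rightarrow> 'y) \<times> ('uh \<Rightarrow> 'yh)) set" where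
  "homC U u0 u1 Y f0 f1 = {(k0, k1). k0 \<in> extensional (nodes U) \<and> k1 \<in> extensional (harcs U)
      \<and> covering U Y k0 k1 \<and> (\<forall>v\<in>nodes U. f0 (k0 v) = u0 v) \<and> (\<forall>a\<in>harcs U. f1 (k1 a) = u1 a)}"

definition compose_with :: "('u, 'uh) ugraph \<Rightarrow> ('y \<Rightarrow> 'z) \<Rightarrow> ('yh \<Rightarrow> 'zh)
    \<Rightarrow> ('u \<Rightarrow> 'y) \<times> ('uh \<Rightarrow> 'yh) \<Rightarrow> ('u \<Rightarrow> 'z) \<times> ('uh \<Rightarrow> 'zh)" where
  "compose_with U h0 h1 k = (restrict (h0 \<circ> fst k) (nodes U), restrict (h1 \<circ> snd k) (harcs U))"

definition objC :: "('x, 'xh) ugraph \<Rightarrow> ('y, 'yh) ugraph \<Rightarrow> ('y \<Rightarrow> 'x) \<Rightarrow> ('yh \<Rightarrow> 'xh) \<Rightarrow> bool" where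
  "objC X Y f0 f1 \<longleftrightarrow> wf_graph Y \<and> covering Y X f0 f1"

definition morC :: "('x, 'xh) ugraph \<Rightarrow> ('y, 'yh) ugraph \<Rightarrow> ('y \<Rightarrow> 'x) \<Rightarrow> ('yh \<Rightarrow> 'xh)
    \<Rightarrow> ('z, 'zh) ugraph \<Rightarrow> ('z \<Rightarrow> 'x) \<Rightarrow> ('zh \<Rightarrow> 'xh) \<Rightarrow> ('y \<Rightarrow> 'z) \<Rightarrow> ('yh \<Rightarrow> 'zh) \<Rightarrow> bool" where
  "morC X Y f0 f1 Z g0 g1 h0 h1 \<longleftrightarrow> covering Y Z h0 h1 \<and>
     (\<forall>v\<in>nodes Y. g0 (h0 v) = f0 v) \<and> (\<forall>a\<in>harcs Y. g1 (h1 a) = f1 a)"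

text \<open>The test objects
  U range over graphs whose nodes and half-arcs are carried by the type 'xh list; this type
  is large enough to contain an isomorphic copy of every object of R_X (these are connected
  coverings of X), and the Hom-set condition is invariant under isomorphism of U.\<close>
definition weak_equiv :: "('x, 'xh) ugraph \<Rightarrow> ('y, 'yh) ugraph \<Rightarrow> ('y \<Rightarrow> 'x) \<Rightarrow> ('yh \<Rightarrow> 'xh)
    \<Rightarrow> ('z, 'zh) ugraph \<Rightarrow> ('z \<Rightarrow> 'x) \<Rightarrow> ('zh \<Rightarrow> 'xh) \<Rightarrow> ('y \<Rightarrow> 'z) \<Rightarrow> ('yh \<Rightarrow> 'zh) \<Rightarrow> bool" where
  "weak_equiv X Y f0 f1 Z g0 g1 h0 h1 \<longleftrightarrow>
     (\<forall>p\<ge>1. \<forall>(U :: ('xh list, 'xh list) ugraph) u0 u1. in_R p X U u0 u1 \<longrightarrow>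
        bij_betw (compose_with U h0 h1) (homC U u0 u1 Y f0 f1) (homC U u0 u1 Z g0 g1))"

end

theory Submission
  imports Defs
begin

definition he :: "('v,'h) ugraph \<Rightarrow> ('h \<Rightarrow> 'a) \<Rightarrow> 'v \<Rightarrow> 'a \<Rightarrow> 'h" where
  "he G l v a = (THE e. e \<in> harcs G \<and> src G e = v \<and> l e = a)"
definition stepG :: "('v,'h) ugraph \<Rightarrow> ('h \<Rightarrow> 'a) \<Rightarrow> 'v \<Rightarrow> 'a \<Rightarrow> 'v" where
  "stepG G l v a = tgt G (he G l v a)"
definition walk :: "('v,'h) ugraph \<Rightarrow> ('h \<Rightarrow> 'a) \<Rightarrow> 'v \<Rightarrow> 'a list \<Rightarrow> 'v" where
  "walk G l v w = foldl (stepG G l) v w"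
definition valid :: "('v,'h) ugraph \<Rightarrow> ('h \<Rightarrow> 'a) \<Rightarrow> 'v \<Rightarrow> 'a list \<Rightarrow> bool" where
  "valid G l v w = (\<forall>i<length w. \<exists>e\<in>harcs G. src G e = walk G l v (take i w) \<and> l e = w!i)"
definition uniq :: "('v,'h) ugraph \<Rightarrow> ('h \<Rightarrow> 'a) \<Rightarrow> bool" where
  "uniq G l = (\<forall>e1\<in>harcs G. \<forall>e2\<in>harcs G. src G e1 = src G e2 \<longrightarrow> l e1 = l e2 \<longrightarrow> e1 = e2)"

lemma he_eq: "uniq G l \<Longrightarrow> e \<in> harcs G \<Longrightarrow> src G e = v \<Longrightarrow> l e = a \<Longrightarrow> he G l v a = e"
  unfolding he_def uniq_def by (rule the_equality) auto

lemma walk_Nil[simp]: "walk G l v [] = v" by (simp add: walk_def)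
lemma walk_snoc[simp]: "walk G l v (w @ [a]) = stepG G l (walk G l v w) a" by (simp add: walk_def)
lemma walk_append: "walk G l v (w1 @ w2) = walk G l (walk G l v w1) w2" by (simp add: walk_def)

lemma valid_Nil[simp]: "valid G l v []" by (simp add: valid_def)
lemma valid_snoc: "valid G l v (w @ [a]) \<longleftrightarrow> valid G l v w \<and> (\<exists>e\<in>harcs G. src G e = walk G l v w \<and> l e = a)"
proof -
  have "valid G l v (w @ [a]) \<longleftrightarrow> (\<forall>i<Suc (length w). \<exists>e\<in>harcs G. src G e = walk G l v (take i (w @ [a])) \<and> l e = (w @ [a]) ! i)"
    unfolding valid_def by simp
  also have "\<dots> \<longleftrightarrow> (\<forall>i<length w. \<exists>e\<in>harcs G. src G e = walk G l v (take i (w @ [a])) \<and> l e = (w @ [a]) ! i)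
       \<and> (\<exists>e\<in>harcs G. src G e = walk G l v (take (length w) (w @ [a])) \<and> l e = (w @ [a]) ! length w)"
    by (simp add: less_Suc_eq conj_commute all_conj_distrib)
  also have "\<dots> \<longleftrightarrow> valid G l v w \<and> (\<exists>e\<in>harcs G. src G e = walk G l v w \<and> l e = a)"
    unfolding valid_def by (simp add: nth_append)
  finally show ?thesis .
qed

lemma valid_prefix: "valid G l v (w1 @ w2) \<Longrightarrow> valid G l v w1"
proof (induction w2 rule: rev_induct)
  case (snoc x xs) then show ?case by (metis append_assoc valid_snoc)
qed simp

lemma valid_append: "valid G l v (w1 @ w2) \<longleftrightarrow> valid G l v w1 \<and> valid G l (walk G l v w1) w2"
proof (induction w2 rule: rev_induct)
  case (snoc x xs)
  have "valid G l v (w1 @ xs @ [x]) \<longleftrightarrow> valid G l v (w1 @ xs) \<and> (\<exists>e\<in>harcs G. src G e = walk G l v (w1 @ xs) \<and> l e = x)"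
    using valid_snoc[of G l v "w1 @ xs" x] by simp
  also have "\<dots> \<longleftrightarrow> valid G l v w1 \<and> valid G l (walk G l v w1) (xs @ [x])"
    using snoc.IH valid_snoc[of G l "walk G l v w1" xs x] walk_append[of G l v w1 xs] by auto
  finally show ?case by simp
qed simp

lemma valid_he: "uniq G l \<Longrightarrow> valid G l v (w @ [a]) \<Longrightarrow>
   he G l (walk G l v w) a \<in> harcs G \<and> src G (he G l (walk G l v w) a) = walk G l v w \<and> l (he G l (walk G l v w) a) = a"
  unfolding valid_snoc using he_eq by metis

lemma valid_nodes: "wf_graph G \<Longrightarrow> uniq G l \<Longrightarrow> v \<in> nodes G \<Longrightarrow> valid G l v w \<Longrightarrow> walk G l v w \<in> nodes G"
proof (induction w rule: rev_induct)
  case (snoc x xs)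
  then have "valid G l v xs" using valid_prefix[of G l v xs "[x]"] by blast
  have "he G l (walk G l v xs) x \<in> harcs G" using valid_he[OF snoc(3) snoc(5)] by blast
  then show ?case using snoc(2) by (simp add: stepG_def wf_graph_def)
qed simp

lemma arcs_at_src: "wf_graph G \<Longrightarrow> e \<in> harcs G \<Longrightarrow> src G e = x \<Longrightarrow> {e, inv G e} \<in> arcs_at G x"
  unfolding arcs_at_def by blast

lemma arcs_at_memE:
  assumes "wf_graph G" "A \<in> arcs_at G x"
  obtains e where "e \<in> harcs G" "src G e = x" "A = {e, inv G e}"
proof -
  from assms(2) obtain u where u: "A = {u, inv G u}" "u \<in> harcs G" "src G u = x \<or> tgt G u = x"
    unfolding arcs_at_def by blast
  show ?thesis
  proof (cases "src G u = x")
    case True then show ?thesis using u that by blast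
  next
    case False
    then have "tgt G u = x" using u by blast
    then show ?thesis using u assms(1) that[of "inv G u"] unfolding wf_graph_def by (metis insert_commute)
  qed
qed

lemma uniq_cov:
  assumes wf: "wf_graph G" and cov: "covering G X f0 f1" and nl: "\<not> has_loop G"
  shows "uniq G f1"
  unfolding uniq_def
proof (intro ballI impI)
  fix e1 e2 assume e: "e1 \<in> harcs G" "e2 \<in> harcs G" "src G e1 = src G e2" "f1 e1 = f1 e2"
  let ?x = "src G e1"
  have m: "morphism G X f0 f1" using cov unfolding covering_def by blast
  have x: "?x \<in> nodes G" using wf e unfolding wf_graph_def by blast
  have bij: "bij_betw (\<lambda>A. f1 ` A) (arcs_at G ?x) (arcs_at X (f0 ?x))" using cov x unfolding covering_def by blast
  have A1: "{e1, inv G e1} \<in> arcs_at G ?x" using arcs_at_src[OF wf e(1)] by simp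
  have A2: "{e2, inv G e2} \<in> arcs_at G ?x" using arcs_at_src[OF wf e(2)] e(3) by simp
  have i1: "f1 (inv G e1) = inv X (f1 e1)" "f1 (inv G e2) = inv X (f1 e2)"
    using m e(1,2) unfolding morphism_def by metis+
  have "f1 ` {e1, inv G e1} = f1 ` {e2, inv G e2}" using i1 e(4) by simp
  then have "{e1, inv G e1} = {e2, inv G e2}" using inj_onD[OF bij_betw_imp_inj_on[OF bij] _ A1 A2] by blast
  then have "e1 = e2 \<or> e2 = inv G e1" by (metis doubleton_eq_iff)
  moreover have "e2 \<noteq> inv G e1"
  proof
    assume a: "e2 = inv G e1"
    have "src G (inv G e1) = tgt G e1" using e(1) wf unfolding wf_graph_def by blast
    then have "src G e1 = tgt G e1" using a e(3) by simp
    then show False using nl e(1) unfolding has_loop_def by blast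
  qed
  ultimately show "e1 = e2" by blast
qed

lemma lift_cov:
  assumes wfG: "wf_graph G" and wfH: "wf_graph H" and cov: "covering G H h0 h1" and nl: "\<not> has_loop H"
    and v: "v \<in> nodes G" and e': "e' \<in> harcs H" "src H e' = h0 v"
  shows "\<exists>e\<in>harcs G. src G e = v \<and> h1 e = e'"
proof -
  have m: "morphism G H h0 h1" using cov unfolding covering_def by blast
  have bij: "bij_betw (\<lambda>A. h1 ` A) (arcs_at G v) (arcs_at H (h0 v))" using cov v unfolding covering_def by blast
  have "{e', inv H e'} \<in> arcs_at H (h0 v)" using arcs_at_src[OF wfH e'] .
  then obtain A where A: "A \<in> arcs_at G v" "h1 ` A = {e', inv H e'}" using bij unfolding bij_betw_def by (metis imageE)
  obtain e where e: "e \<in> harcs G" "src G e = v" "A = {e, inv G e}" using arcs_at_memE[OF wfG A(1)] by blast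
  have "h1 ` A = {h1 e, inv H (h1 e)}" using e m unfolding morphism_def by auto
  then have "h1 e = e' \<or> h1 e = inv H e'" using A(2) by (metis doubleton_eq_iff)
  moreover have "h1 e \<noteq> inv H e' \<or> h1 e = e'"
  proof (rule disjCI)
    assume "h1 e \<noteq> e'"
    show "h1 e \<noteq> inv H e'"
    proof
      assume "h1 e = inv H e'"
      then have "src H (inv H e') = h0 v" using m e unfolding morphism_def by metis
      then have "tgt H e' = src H e'" using wfH e' unfolding wf_graph_def by metis
      then show False using nl e'(1) unfolding has_loop_def by metis
    qed
  qed
  ultimately show ?thesis using e by blast
qed

lemma cyc_simps[simp]: "nodes (cyc p) = {0..<p}" "harcs (cyc p) = {0..<p} \<times> UNIV"
  "src (cyc p) (n, b) = (if b then n else Suc n mod p)"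
  "tgt (cyc p) (n, b) = (if b then Suc n mod p else n)"
  "inv (cyc p) (n, b) = (n, \<not> b)"
  by (simp_all add: cyc_def)

lemma cyc_walk:
  assumes u: "uniq G l" and m: "morphism (cyc p) G c0 c1" and lV: "length V = p"
    and lab: "\<And>i. i < p \<Longrightarrow> l (c1 (i, True)) = V ! i"
  shows "n \<le> p \<Longrightarrow> valid G l (c0 0) (take n V) \<and> walk G l (c0 0) (take n V) = c0 (n mod p)"
proof (induction n)
  case 0 then show ?case by simp
next
  case (Suc n)
  then have IH: "valid G l (c0 0) (take n V)" "walk G l (c0 0) (take n V) = c0 n" by auto
  have np: "n < p" using Suc by simp
  have tk: "take (Suc n) V = take n V @ [V ! n]" using np lV by (simp add: take_Suc_conv_app_nth)
  have e: "c1 (n, True) \<in> harcs G" "src G (c1 (n, True)) = c0 n" "tgt G (c1 (n, True)) = c0 (Suc n mod p)"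
    using m np unfolding morphism_def by auto
  have he: "he G l (c0 n) (V ! n) = c1 (n, True)" using he_eq[OF u e(1) e(2)] lab np by simp
  show ?case unfolding tk using IH e lab np
    by (auto simp: valid_snoc stepG_def he)
qed

lemma retract:
  assumes wf: "wf_graph G" and m: "morphism G X l0 l" and u: "uniq G l" and e: "e \<in> harcs G"
  shows "\<exists>e'\<in>harcs G. src G e' = tgt G e \<and> l e' = inv X (l e)"
    "stepG G l (tgt G e) (inv X (l e)) = src G e"
proof -
  have i: "inv G e \<in> harcs G" "src G (inv G e) = tgt G e" "l (inv G e) = inv X (l e)" "tgt G (inv G e) = src G e"
    using wf m e unfolding wf_graph_def morphism_def by metis+
  then show "\<exists>e'\<in>harcs G. src G e' = tgt G e \<and> l e' = inv X (l e)" by blast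
  show "stepG G l (tgt G e) (inv X (l e)) = src G e"
    unfolding stepG_def using he_eq[OF u i(1) i(2) i(3)] i(4) by simp
qed

lemma retract_walk:
  assumes wf: "wf_graph G" and m: "morphism G X l0 l" and u: "uniq G l" and v: "valid G l v (w @ [b])"
  shows "valid G l v (w @ [b, inv X b]) \<and> walk G l v (w @ [b, inv X b]) = walk G l v w"
proof -
  let ?e = "he G l (walk G l v w) b"
  have e: "?e \<in> harcs G" "src G ?e = walk G l v w" "l ?e = b" using valid_he[OF u v] by auto
  note r = retract[OF wf m u e(1)]
  have w1: "walk G l v (w @ [b]) = tgt G ?e" by (simp add: stepG_def)
  have A: "valid G l v ((w @ [b]) @ [inv X b])"
    unfolding valid_snoc[of G l v "w @ [b]"] using v r(1) e(3) w1 by simp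
  have B: "walk G l v ((w @ [b]) @ [inv X b]) = walk G l v w"
    unfolding walk_snoc[of G l v "w @ [b]"] w1 using r(2) e by simp
  show ?thesis using A B by simp
qed

lemma label_end:
  assumes m: "morphism G X l0 l" and u: "uniq G l" and v: "valid G l v w" and w: "w \<noteq> []"
  shows "l0 (walk G l v w) = tgt X (last w)"
proof -
  obtain w' b where wb: "w = w' @ [b]" using w by (metis rev_exhaust)
  let ?e = "he G l (walk G l v w') b"
  have e: "?e \<in> harcs G" "src G ?e = walk G l v w'" "l ?e = b" using valid_he[OF u] v wb by auto
  then show ?thesis using m wb unfolding morphism_def by (auto simp: stepG_def)
qed

lemma star_cov:
  assumes wfA: "wf_graph A" and wfB: "wf_graph B" and m: "morphism A B f0 f1" and nl: "\<not> has_loop B"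
    and lift: "\<And>v e'. v \<in> nodes A \<Longrightarrow> e' \<in> harcs B \<Longrightarrow> src B e' = f0 v \<Longrightarrow> \<exists>e\<in>harcs A. src A e = v \<and> f1 e = e'"
    and inj: "\<And>e1 e2. e1 \<in> harcs A \<Longrightarrow> e2 \<in> harcs A \<Longrightarrow> src A e1 = src A e2 \<Longrightarrow> f1 e1 = f1 e2 \<Longrightarrow> e1 = e2"
  shows "covering A B f0 f1"
  unfolding covering_def
proof (intro conjI ballI m)
  fix v assume v: "v \<in> nodes A"
  have img: "f1 ` {e, inv A e} = {f1 e, inv B (f1 e)}" if "e \<in> harcs A" for e
    using m that unfolding morphism_def by auto
  show "bij_betw (\<lambda>S. f1 ` S) (arcs_at A v) (arcs_at B (f0 v))"
    unfolding bij_betw_def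
  proof (intro conjI)
    show "inj_on (\<lambda>S. f1 ` S) (arcs_at A v)"
    proof (rule inj_onI)
      fix S1 S2 assume S: "S1 \<in> arcs_at A v" "S2 \<in> arcs_at A v" "f1 ` S1 = f1 ` S2"
      obtain e1 where e1: "e1 \<in> harcs A" "src A e1 = v" "S1 = {e1, inv A e1}" using arcs_at_memE[OF wfA S(1)] by blast
      obtain e2 where e2: "e2 \<in> harcs A" "src A e2 = v" "S2 = {e2, inv A e2}" using arcs_at_memE[OF wfA S(2)] by blast
      have "{f1 e1, inv B (f1 e1)} = {f1 e2, inv B (f1 e2)}" using S(3) e1 e2 img by simp
      then have "f1 e1 = f1 e2 \<or> f1 e2 = inv B (f1 e1)" by (metis doubleton_eq_iff)
      moreover have "f1 e2 \<noteq> inv B (f1 e1)"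
      proof
        assume a: "f1 e2 = inv B (f1 e1)"
        have h: "f1 e1 \<in> harcs B" "src B (f1 e1) = f0 v" "src B (f1 e2) = f0 v"
          using m e1 e2 unfolding morphism_def by auto
        then have "tgt B (f1 e1) = src B (f1 e1)" using wfB a unfolding wf_graph_def by metis
        then show False using nl h(1) unfolding has_loop_def by metis
      qed
      ultimately have "e1 = e2" using inj e1 e2 by metis
      then show "S1 = S2" using e1 e2 by simp
    qed
    show "(\<lambda>S. f1 ` S) ` arcs_at A v = arcs_at B (f0 v)"
    proof (intro equalityI subsetI)
      fix T assume "T \<in> (\<lambda>S. f1 ` S) ` arcs_at A v"
      then obtain S where S: "S \<in> arcs_at A v" "T = f1 ` S" by blast
      obtain e where e: "e \<in> harcs A" "src A e = v" "S = {e, inv A e}" using arcs_at_memE[OF wfA S(1)] by blast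
      have "f1 e \<in> harcs B" "src B (f1 e) = f0 v" using m e unfolding morphism_def by auto
      then show "T \<in> arcs_at B (f0 v)" using S e img arcs_at_src[OF wfB] by simp
    next
      fix T assume T: "T \<in> arcs_at B (f0 v)"
      obtain e' where e': "e' \<in> harcs B" "src B e' = f0 v" "T = {e', inv B e'}" using arcs_at_memE[OF wfB T] by blast
      obtain e where e: "e \<in> harcs A" "src A e = v" "f1 e = e'" using lift[OF v e'(1,2)] by blast
      have "{e, inv A e} \<in> arcs_at A v" using arcs_at_src[OF wfA e(1,2)] .
      moreover have "T = f1 ` {e, inv A e}" using img[OF e(1)] e e' by simp
      ultimately show "T \<in> (\<lambda>S. f1 ` S) ` arcs_at A v" by blast
    qed
  qed
qed

lemma cov_trans:
  assumes wfA: "wf_graph A" and c1: "covering A B f0 f1" and c2: "covering B C g0 g1"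
    and e0: "\<And>v. v \<in> nodes A \<Longrightarrow> k0 v = g0 (f0 v)" and e1: "\<And>e. e \<in> harcs A \<Longrightarrow> k1 e = g1 (f1 e)"
  shows "covering A C k0 k1"
proof -
  have m1: "morphism A B f0 f1" and m2: "morphism B C g0 g1" using c1 c2 unfolding covering_def by auto
  have m: "morphism A C k0 k1"
    unfolding morphism_def
  proof (intro conjI ballI)
    fix v assume "v \<in> nodes A" then show "k0 v \<in> nodes C" using m1 m2 e0 unfolding morphism_def by auto
  next
    fix u assume u: "u \<in> harcs A"
    have s: "src A u \<in> nodes A" "tgt A u \<in> nodes A" "inv A u \<in> harcs A" using wfA u unfolding wf_graph_def by auto
    show "k1 u \<in> harcs C" "src C (k1 u) = k0 (src A u)" "tgt C (k1 u) = k0 (tgt A u)" "inv C (k1 u) = k1 (inv A u)"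
      using m1 m2 u s e0 e1 unfolding morphism_def by auto
  qed
  show ?thesis unfolding covering_def
  proof (intro conjI ballI m)
    fix v assume v: "v \<in> nodes A"
    have b1: "bij_betw (\<lambda>S. f1 ` S) (arcs_at A v) (arcs_at B (f0 v))" using c1 v unfolding covering_def by blast
    have "f0 v \<in> nodes B" using m1 v unfolding morphism_def by blast
    then have b2: "bij_betw (\<lambda>S. g1 ` S) (arcs_at B (f0 v)) (arcs_at C (g0 (f0 v)))" using c2 unfolding covering_def by blast
    have b: "bij_betw ((\<lambda>S. g1 ` S) \<circ> (\<lambda>S. f1 ` S)) (arcs_at A v) (arcs_at C (g0 (f0 v)))"
      using bij_betw_trans[OF b1 b2] .
    have sub: "S \<subseteq> harcs A" if "S \<in> arcs_at A v" for S
      using that wfA unfolding arcs_at_def wf_graph_def by auto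
    have "bij_betw (\<lambda>S. k1 ` S) (arcs_at A v) (arcs_at C (g0 (f0 v)))"
      apply (rule bij_betw_cong[THEN iffD1, OF _ b])
      using sub e1 by (force simp: image_image)
    then show "bij_betw (\<lambda>S. k1 ` S) (arcs_at A v) (arcs_at C (k0 v))" using e0 v by simp
  qed
qed


locale unf =
  fixes X :: "('x, 'xh) ugraph" and Z :: "('z, 'zh) ugraph" and g0 :: "'z \<Rightarrow> 'x" and g1 :: "'zh \<Rightarrow> 'xh"
    and p :: nat and d0 :: "nat \<Rightarrow> 'z" and d1 :: "nat \<times> bool \<Rightarrow> 'zh"
  assumes wfX: "wf_graph X" and objZ: "objC X Z g0 g1" and nlZ: "\<not> has_loop Z" and p1: "p \<ge> 1"
    and dcyc: "(d0, d1) \<in> nb_cycles p Z"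
begin

definition "W = map (\<lambda>i. g1 (d1 (i, True))) [0..<p]"
definition "aa n = g1 (d1 (n mod p, True))"
definition "z0 = d0 0"
definition reduced :: "'xh list \<Rightarrow> bool" where
  "reduced w = (\<forall>i. Suc i < length w \<longrightarrow> w ! Suc i \<noteq> inv X (w ! i))"
definition ok :: "nat \<Rightarrow> 'xh list \<Rightarrow> bool" where
  "ok n w = (n < p \<and> valid Z g1 z0 (take n W @ w) \<and> reduced w \<and>
      (w \<noteq> [] \<longrightarrow> hd w \<noteq> aa n \<and> hd w \<noteq> inv X (aa (n + p - 1))))"
definition enc :: "nat \<times> 'xh list \<Rightarrow> 'xh list" where "enc = (\<lambda>(n, w). take n W @ w)"
definition "S = {(n, w). ok n w}"
definition "N = enc ` S"
definition "dec = the_inv_into S enc"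
definition "H = {L @ [a] | L a. L \<in> N \<and> valid Z g1 z0 (L @ [a])}"
definition step :: "'xh list \<Rightarrow> 'xh \<Rightarrow> 'xh list" where
  "step L a = (case dec L of (n, w) \<Rightarrow>
     if w \<noteq> [] \<and> a = inv X (last w) then enc (n, butlast w)
     else if w = [] \<and> a = aa n then enc (Suc n mod p, [])
     else if w = [] \<and> a = inv X (aa (n + p - 1)) then enc ((n + p - 1) mod p, [])
     else enc (n, w @ [a]))"
definition "U = \<lparr>nodes = N, harcs = H, src = butlast, tgt = (\<lambda>e. step (butlast e) (last e)),
   inv = (\<lambda>e. step (butlast e) (last e) @ [inv X (last e)])\<rparr>"
definition "u0 L = g0 (walk Z g1 z0 L)"
definition "phi0 n = take n W"
definition "phi1 = (\<lambda>(n, b). if b then take n W @ [W ! n] else take (Suc n mod p) W @ [inv X (W ! n)])"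
definition "kk G l v0 = (restrict (walk G l v0) N, restrict (\<lambda>e. he G l (walk G l v0 (butlast e)) (last e)) H)"

lemma wfZ: "wf_graph Z" and covZ: "covering Z X g0 g1" and mZ: "morphism Z X g0 g1"
  using objZ unfolding objC_def covering_def by auto
lemma uZ: "uniq Z g1" using uniq_cov[OF wfZ covZ nlZ] .
lemma dm: "morphism (cyc p) Z d0 d1" using dcyc unfolding nb_cycles_def p_cycles_def by auto
lemma dnb: "\<not> backtracking p d1" using dcyc unfolding nb_cycles_def by auto
lemma lenW[simp]: "length W = p" by (simp add: W_def)
lemma nthW: "i < p \<Longrightarrow> W ! i = g1 (d1 (i, True))" by (simp add: W_def)
lemma aa_W: "aa n = W ! (n mod p)" using p1 by (simp add: aa_def nthW)
lemma aa_lt: "n < p \<Longrightarrow> aa n = W ! n" by (simp add: aa_W)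

lemma cycZ: "n \<le> p \<Longrightarrow> valid Z g1 z0 (take n W) \<and> walk Z g1 z0 (take n W) = d0 (n mod p)"
  unfolding z0_def by (rule cyc_walk[OF uZ dm lenW nthW[symmetric]])

lemma d1_props: "n < p \<Longrightarrow> d1 (n, True) \<in> harcs Z \<and> src Z (d1 (n, True)) = d0 n \<and> tgt Z (d1 (n, True)) = d0 (Suc n mod p)
   \<and> d1 (n, False) = inv Z (d1 (n, True)) \<and> d1 (n, False) \<in> harcs Z \<and> src Z (d1 (n, False)) = d0 (Suc n mod p)"
proof -
  assume n: "n < p"
  have h: "\<forall>u\<in>harcs (cyc p). d1 u \<in> harcs Z \<and> src Z (d1 u) = d0 (src (cyc p) u)
        \<and> tgt Z (d1 u) = d0 (tgt (cyc p) u) \<and> inv Z (d1 u) = d1 (inv (cyc p) u)"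
    using dm unfolding morphism_def by blast
  have a: "(n, True) \<in> harcs (cyc p)" "(n, False) \<in> harcs (cyc p)" using n by auto
  show ?thesis using h[rule_format, OF a(1)] h[rule_format, OF a(2)] by simp
qed

lemma W_harcs: assumes n: "n < p" shows "W ! n \<in> harcs X"
proof -
  have e: "d1 (n, True) \<in> harcs Z" using d1_props[OF n] by simp
  have "g1 (d1 (n, True)) \<in> harcs X" using mZ e unfolding morphism_def by blast
  then show ?thesis using nthW[OF n] by simp
qed

lemma inv_inv_W: "n < p \<Longrightarrow> inv X (inv X (W ! n)) = W ! n"
  using W_harcs wfX unfolding wf_graph_def by auto

lemma nb_lab: "n < p \<Longrightarrow> W ! (Suc n mod p) \<noteq> inv X (W ! n)"
proof
  assume n: "n < p" and eq: "W ! (Suc n mod p) = inv X (W ! n)"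
  have m: "Suc n mod p < p" using p1 by simp
  note A = d1_props[OF n] and B = d1_props[OF m]
  have e: "d1 (n, True) \<in> harcs Z" using A by simp
  have "inv X (g1 (d1 (n, True))) = g1 (inv Z (d1 (n, True)))" using mZ e unfolding morphism_def by blast
  then have g: "g1 (d1 (n, False)) = inv X (W ! n)" using A nthW[OF n] by simp
  have h1: "he Z g1 (d0 (Suc n mod p)) (W ! (Suc n mod p)) = d1 (Suc n mod p, True)"
    by (rule he_eq[OF uZ]) (use B nthW[OF m] in auto)
  have h2: "he Z g1 (d0 (Suc n mod p)) (W ! (Suc n mod p)) = d1 (n, False)"
    by (rule he_eq[OF uZ]) (use A g eq in auto)
  have "d1 (Suc n mod p, True) = d1 (n, False)" using h1 h2 by simp
  then show False using dnb n unfolding backtracking_def by blast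
qed

lemma ok_lt: "ok n w \<Longrightarrow> n < p" by (simp add: ok_def)

lemma take_less_hd:
  assumes "n < m" "m \<le> p" "take n W @ w = take m W @ w'"
  shows "w \<noteq> [] \<and> hd w = W ! n"
proof -
  have "take m W = take n W @ take (m - n) (drop n W)" using assms(1)
    by (metis add_diff_inverse_nat not_less_iff_gr_or_eq take_add)
  moreover have "take (m - n) (drop n W) = W ! n # take (m - n - 1) (drop (Suc n) W)"
  proof -
    have "n < length W" using assms(1,2) by simp
    then have "drop n W = W ! n # drop (Suc n) W" by (rule Cons_nth_drop_Suc[symmetric])
    moreover have "m - n = Suc (m - n - 1)" using assms(1) by simp
    ultimately show ?thesis by (metis take_Suc_Cons)
  qed
  ultimately have "w = W ! n # take (m - n - 1) (drop (Suc n) W) @ w'" using assms(3) by simp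
  then show ?thesis by simp
qed

lemma enc_inj: "inj_on enc S"
proof (rule inj_onI)
  fix s t assume s: "s \<in> S" and t: "t \<in> S" and e: "enc s = enc t"
  obtain n w where sn: "s = (n, w)" by (cases s)
  obtain m w' where tm: "t = (m, w')" by (cases t)
  have on: "ok n w" "ok m w'" using s t sn tm unfolding S_def by auto
  have eq: "take n W @ w = take m W @ w'" using e sn tm unfolding enc_def by simp
  have "n = m"
  proof (rule ccontr)
    assume "n \<noteq> m"
    then consider "n < m" | "m < n" by linarith
    then show False
    proof cases
      case 1
      have "m < p" using on(2) ok_lt by blast
      then have "w \<noteq> [] \<and> hd w = W ! n" using take_less_hd[OF 1 _ eq] by simp
      then show False using on(1) aa_lt[of n] 1 \<open>m < p\<close> unfolding ok_def by simp
    next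
      case 2
      have "n < p" using on(1) ok_lt by blast
      then have "w' \<noteq> [] \<and> hd w' = W ! m" using take_less_hd[OF 2 _ eq[symmetric]] by simp
      then show False using on(2) aa_lt[of m] 2 \<open>n < p\<close> unfolding ok_def by simp
    qed
  qed
  then show "s = t" using eq sn tm by simp
qed

lemma dec_enc: "ok n w \<Longrightarrow> dec (enc (n, w)) = (n, w)"
  unfolding dec_def by (rule the_inv_into_f_f[OF enc_inj]) (simp add: S_def)

lemma N_iff: "L \<in> N \<longleftrightarrow> (\<exists>n w. ok n w \<and> L = enc (n, w))"
  unfolding N_def S_def by auto

lemma N_dec: assumes "L \<in> N" shows "ok (fst (dec L)) (snd (dec L))" "enc (dec L) = L"
proof -
  obtain n w where "ok n w" "L = enc (n, w)" using assms N_iff by blast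
  then show "ok (fst (dec L)) (snd (dec L))" "enc (dec L) = L" using dec_enc by auto
qed

lemma enc_simp: "enc (n, w) = take n W @ w" by (simp add: enc_def)

lemma ok_valid: "ok n w \<Longrightarrow> valid Z g1 z0 (take n W @ w)" by (simp add: ok_def)


lemma ok_cyc: "n < p \<Longrightarrow> ok n []"
  unfolding ok_def reduced_def using cycZ[of n] by simp

lemma reduced_take: assumes "reduced w" shows "reduced (take j w)"
  unfolding reduced_def
proof (intro allI impI)
  fix i assume i: "Suc i < length (take j w)"
  then have "Suc i < length w" "Suc i < j" by auto
  then show "take j w ! Suc i \<noteq> inv X (take j w ! i)" using assms unfolding reduced_def by simp
qed

lemma reduced_butlast: "reduced w \<Longrightarrow> reduced (butlast w)"
  by (simp add: butlast_conv_take reduced_take)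

lemma reduced_snoc: assumes r: "reduced w" and a: "w \<noteq> [] \<Longrightarrow> a \<noteq> inv X (last w)" shows "reduced (w @ [a])"
  unfolding reduced_def
proof (intro allI impI)
  fix i assume i: "Suc i < length (w @ [a])"
  show "(w @ [a]) ! Suc i \<noteq> inv X ((w @ [a]) ! i)"
  proof (cases "Suc i < length w")
    case True then show ?thesis using r unfolding reduced_def by (simp add: nth_append)
  next
    case False
    then have "Suc i = length w" using i by simp
    then have "w \<noteq> []" "(w @ [a]) ! Suc i = a" by auto
    moreover have "(w @ [a]) ! i = last w"
    proof -
      have "i < length w" "length w - 1 = i" using \<open>Suc i = length w\<close> by simp_all
      then show ?thesis using \<open>w \<noteq> []\<close> by (simp add: nth_append last_conv_nth)
    qed
    ultimately show ?thesis using a by simp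
  qed
qed

lemma step_cases:
  assumes "ok n w"
  obtains (c1) w' b where "w = w' @ [b]" "a = inv X b" "step (enc (n, w)) a = enc (n, w')"
  | (c2) "w = []" "a = aa n" "step (enc (n, w)) a = enc (Suc n mod p, [])"
  | (c3) "w = []" "a \<noteq> aa n" "a = inv X (aa (n + p - 1))" "step (enc (n, w)) a = enc ((n + p - 1) mod p, [])"
  | (c4) "w \<noteq> [] \<Longrightarrow> a \<noteq> inv X (last w)" "w = [] \<Longrightarrow> a \<noteq> aa n \<and> a \<noteq> inv X (aa (n + p - 1))"
         "step (enc (n, w)) a = enc (n, w @ [a])"
proof -
  have sd: "step (enc (n, w)) a = (if w \<noteq> [] \<and> a = inv X (last w) then enc (n, butlast w)
     else if w = [] \<and> a = aa n then enc (Suc n mod p, [])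
     else if w = [] \<and> a = inv X (aa (n + p - 1)) then enc ((n + p - 1) mod p, [])
     else enc (n, w @ [a]))" unfolding step_def dec_enc[OF assms] by simp
  show ?thesis
  proof (cases "w \<noteq> [] \<and> a = inv X (last w)")
    case True
    show ?thesis by (rule c1[of "butlast w" "last w"]) (use True sd in simp_all)
  next
    case F1: False
    show ?thesis
    proof (cases "w = [] \<and> a = aa n")
      case True show ?thesis by (rule c2) (use True sd in simp_all)
    next
      case F2: False
      show ?thesis
      proof (cases "w = [] \<and> a = inv X (aa (n + p - 1))")
        case True show ?thesis by (rule c3) (use True sd F2 in simp_all)
      next
        case False show ?thesis by (rule c4) (use False sd F1 F2 in auto)
      qed
    qed
  qed
qed

lemma step_N:
  assumes ok: "ok n w" and v: "valid Z g1 z0 (take n W @ w @ [a])"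
  shows "step (enc (n, w)) a \<in> N"
  using ok
proof (cases rule: step_cases[where a = a])
  case (c1 w' b)
  have o: "n < p" "valid Z g1 z0 (take n W @ w' @ [b])" "reduced (w' @ [b])"
     "w' @ [b] \<noteq> [] \<longrightarrow> hd (w' @ [b]) \<noteq> aa n \<and> hd (w' @ [b]) \<noteq> inv X (aa (n + p - 1))"
    using ok unfolding ok_def c1(1) by auto
  have "valid Z g1 z0 (take n W @ w')" using valid_prefix[of Z g1 z0 "take n W @ w'" "[b]"] o(2) by simp
  moreover have "reduced w'" using reduced_butlast[OF o(3)] by simp
  moreover have "w' \<noteq> [] \<longrightarrow> hd w' \<noteq> aa n \<and> hd w' \<noteq> inv X (aa (n + p - 1))" using o(4) by (cases w') auto
  ultimately have "ok n w'" using o(1) unfolding ok_def by blast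
  then show ?thesis using c1(3) N_iff by blast
next
  case c2
  have "ok (Suc n mod p) []" using ok_cyc p1 by simp
  then show ?thesis using c2(3) N_iff by blast
next
  case c3
  have "ok ((n + p - 1) mod p) []" using ok_cyc p1 by simp
  then show ?thesis using c3(4) N_iff by blast
next
  case c4
  have o: "n < p" "reduced w" "w \<noteq> [] \<longrightarrow> hd w \<noteq> aa n \<and> hd w \<noteq> inv X (aa (n + p - 1))"
    using ok unfolding ok_def by auto
  have "reduced (w @ [a])" using reduced_snoc[OF o(2) c4(1)] by blast
  moreover have "hd (w @ [a]) \<noteq> aa n \<and> hd (w @ [a]) \<noteq> inv X (aa (n + p - 1))"
    using o(3) c4(2) by (cases w) auto
  ultimately have "ok n (w @ [a])" using o(1) v unfolding ok_def by simp
  then show ?thesis using c4(3) N_iff by blast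
qed

end


lemma valid_label:
  assumes m: "morphism G X l0 l" and v: "valid G l v w" and i: "i < length w"
  shows "w ! i \<in> harcs X"
proof -
  obtain e where "e \<in> harcs G" "l e = w ! i" using v i unfolding valid_def by blast
  then show ?thesis using m unfolding morphism_def by metis
qed

lemma walk_snoc2[simp]: "walk G l v (xs @ ys @ [a]) = stepG G l (walk G l v (xs @ ys)) a"
  using walk_snoc[of G l v "xs @ ys" a] by simp

lemma walk_single[simp]: "walk G l v [a] = stepG G l v a" by (simp add: walk_def)

context unf begin

lemma U_simps[simp]: "nodes U = N" "harcs U = H" "src U = butlast" "tgt U e = step (butlast e) (last e)"
  "inv U e = step (butlast e) (last e) @ [inv X (last e)]"
  by (simp_all add: U_def)

lemma N_valid: "L \<in> N \<Longrightarrow> valid Z g1 z0 L"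
  using N_iff ok_valid enc_simp by metis

lemma ok_butlast:
  assumes ok: "ok n (w' @ [b])" shows "ok n w'"
proof -
  have o: "n < p" "valid Z g1 z0 (take n W @ w' @ [b])" "reduced (w' @ [b])"
     "w' @ [b] \<noteq> [] \<longrightarrow> hd (w' @ [b]) \<noteq> aa n \<and> hd (w' @ [b]) \<noteq> inv X (aa (n + p - 1))"
    using ok unfolding ok_def by auto
  have "valid Z g1 z0 (take n W @ w')" using valid_prefix[of Z g1 z0 "take n W @ w'" "[b]"] o(2) by simp
  moreover have "reduced w'" using reduced_butlast[OF o(3)] by simp
  moreover have "w' \<noteq> [] \<longrightarrow> hd w' \<noteq> aa n \<and> hd w' \<noteq> inv X (aa (n + p - 1))" using o(4) by (cases w') auto
  ultimately show "ok n w'" using o(1) unfolding ok_def by blast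
qed

lemma ok_snoc:
  assumes ok: "ok n w" and v: "valid Z g1 z0 (take n W @ w @ [a])"
    and c1: "w \<noteq> [] \<Longrightarrow> a \<noteq> inv X (last w)" and c2: "w = [] \<Longrightarrow> a \<noteq> aa n \<and> a \<noteq> inv X (aa (n + p - 1))"
  shows "ok n (w @ [a])"
proof -
  have o: "n < p" "reduced w" "w \<noteq> [] \<longrightarrow> hd w \<noteq> aa n \<and> hd w \<noteq> inv X (aa (n + p - 1))"
    using ok unfolding ok_def by auto
  have "reduced (w @ [a])" using reduced_snoc[OF o(2) c1] by blast
  moreover have "hd (w @ [a]) \<noteq> aa n \<and> hd (w @ [a]) \<noteq> inv X (aa (n + p - 1))"
    using o(3) c2 by (cases w) auto
  ultimately show "ok n (w @ [a])" using o(1) v unfolding ok_def by simp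
qed

lemma mod_pred: "n < p \<Longrightarrow> 0 < n \<Longrightarrow> (n + p - 1) mod p = n - 1"
  by (metis Nat.add_diff_assoc2 One_nat_def Suc_leI add.commute diff_less less_imp_diff_less mod_add_self2 mod_less zero_less_one)
lemma mod_pred0: "(0 + p - 1) mod p = p - 1" using p1 by simp
lemma mod_pred_suc: "n < p \<Longrightarrow> Suc ((n + p - 1) mod p) mod p = n"
  using p1 by (cases n) (auto simp: mod_pred0 mod_pred)
lemma mod_suc_pred: "n < p \<Longrightarrow> (Suc n mod p + p - 1) mod p = n"
proof -
  assume n: "n < p"
  show ?thesis
  proof (cases "Suc n < p")
    case True then show ?thesis using mod_pred[of "Suc n"] by simp
  next
    case False then have "Suc n = p" using n by simp
    then show ?thesis using mod_pred0 by simp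
  qed
qed

lemma step_walk:
  assumes wfG: "wf_graph G" and mG: "morphism G X l0 l" and uG: "uniq G l"
    and vW: "valid G l v0 W" and cW: "walk G l v0 W = v0"
    and ok: "ok n w" and v: "valid G l v0 (take n W @ w @ [a])"
  shows "walk G l v0 (step (enc (n, w)) a) = walk G l v0 (take n W @ w @ [a])"
  using ok
proof (cases rule: step_cases[where a = a])
  case (c1 w' b)
  have eq: "take n W @ w @ [a] = (take n W @ w') @ [b, inv X b]" using c1 by simp
  have vv: "valid G l v0 ((take n W @ w') @ [b])"
    using v unfolding eq using valid_prefix[of G l v0 "(take n W @ w') @ [b]" "[inv X b]"] by simp
  have st: "step (enc (n, w)) a = take n W @ w'" using c1(3) by (simp add: enc_simp)
  show ?thesis unfolding st eq using retract_walk[OF wfG mG uG vv] by simp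
next
  case c2
  have n: "n < p" using ok ok_lt by blast
  have a: "a = W ! n" using c2 aa_lt n by simp
  show ?thesis
  proof (cases "Suc n < p")
    case True
    have st: "step (enc (n, w)) a = take (Suc n) W" using c2(3) True by (simp add: enc_simp)
    show ?thesis unfolding st using c2(1) a True by (simp add: take_Suc_conv_app_nth)
  next
    case False
    then have sp: "Suc n = p" using n by simp
    have "take n W @ [W ! n] = W" using sp by (metis lenW lessI take_Suc_conv_app_nth take_all order_refl)
    have st: "step (enc (n, w)) a = []" using c2(3) sp by (simp add: enc_simp)
    show ?thesis unfolding st using c2(1) a sp cW \<open>take n W @ [W ! n] = W\<close> by simp
  qed
next
  case c3
  have n: "n < p" using ok ok_lt by blast
  show ?thesis
  proof (cases "n = 0")
    case False
    let ?m = "n - 1"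
    have m: "(n + p - 1) mod p = ?m" using mod_pred n False by simp
    have tk: "take n W = take ?m W @ [W ! ?m]" using n False
      by (metis Suc_pred' lenW less_imp_diff_less not_gr_zero take_Suc_conv_app_nth)
    have aa: "aa (n + p - 1) = W ! ?m" using aa_W m by simp
    have "valid G l v0 (take n W)"
      using vW valid_prefix[of G l v0 "take n W" "drop n W"] by simp
    then have vv: "valid G l v0 (take ?m W @ [W ! ?m])" using tk by simp
    have st: "step (enc (n, w)) a = take ?m W" using c3(4) m by (simp add: enc_simp)
    show ?thesis unfolding st using c3(1,3) aa tk retract_walk[OF wfG mG uG vv] by simp
  next
    case True
    let ?q = "p - 1"
    have q: "?q < p" using p1 by simp
    have WW: "W = take ?q W @ [W ! ?q]" using p1
      by (metis One_nat_def Suc_pred lenW lessI take_Suc_conv_app_nth take_all order_refl zero_less_one less_le_trans)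
    have aa: "aa (n + p - 1) = W ! ?q" using True aa_W mod_pred0 by simp
    have vq: "valid G l v0 (take ?q W @ [W ! ?q])" using vW WW by simp
    let ?e = "he G l (walk G l v0 (take ?q W)) (W ! ?q)"
    have e: "?e \<in> harcs G" "src G ?e = walk G l v0 (take ?q W)" "l ?e = W ! ?q" using valid_he[OF uG vq] by auto
    have te: "tgt G ?e = v0" using cW WW by (metis walk_snoc stepG_def)
    have "stepG G l (tgt G ?e) (inv X (l ?e)) = src G ?e" using retract(2)[OF wfG mG uG e(1)] .
    moreover have st: "step (enc (n, w)) a = take ?q W" using c3(4) True mod_pred0 by (simp add: enc_simp)
    ultimately show ?thesis unfolding st using True c3(1,3) aa te e by simp
  qed
next
  case c4
  then show ?thesis by (simp add: enc_simp)
qed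

lemma label_X: "valid Z g1 z0 (L @ [a]) \<Longrightarrow> a \<in> harcs X"
  using valid_label[OF mZ, of z0 "L @ [a]" "length L"] by simp

lemma inv_inv_X: "a \<in> harcs X \<Longrightarrow> inv X (inv X a) = a"
  using wfX unfolding wf_graph_def by blast

lemma step_inv:
  assumes ok: "ok n w" and v: "valid Z g1 z0 (take n W @ w @ [a])"
  shows "step (step (enc (n, w)) a) (inv X a) = enc (n, w)"
  using ok
proof (cases rule: step_cases[where a = a])
  case (c1 w' b)
  have okw': "ok n w'" using ok_butlast ok c1(1) by blast
  have "valid Z g1 z0 ((take n W @ w') @ [b])" using valid_prefix[of Z g1 z0 "take n W @ w' @ [b]" "[a]"] v c1(1) by simp
  then have bX: "b \<in> harcs X" by (rule label_X)
  have ia: "inv X a = b" using c1(2) inv_inv_X[OF bX] by simp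
  have o: "reduced w" "w \<noteq> [] \<longrightarrow> hd w \<noteq> aa n \<and> hd w \<noteq> inv X (aa (n + p - 1))" using ok unfolding ok_def by auto
  have "step (enc (n, w')) b = enc (n, w)" using okw'
  proof (cases rule: step_cases[where a = b])
    case (c1 w'' b')
    have "w ! Suc (length w'') = b" "w ! length w'' = b'" using c1(1) \<open>w = w' @ [b]\<close> by (simp_all add: nth_append)
    moreover have "Suc (length w'') < length w" using c1(1) \<open>w = w' @ [b]\<close> by simp
    ultimately show ?thesis using o(1) c1(2) unfolding reduced_def by metis
  next
    case c2 then show ?thesis using o(2) \<open>w = w' @ [b]\<close> by simp
  next
    case c3 then show ?thesis using o(2) \<open>w = w' @ [b]\<close> by simp
  next
    case c4 then show ?thesis using \<open>w = w' @ [b]\<close> by simp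
  qed
  then show ?thesis using c1(3) ia by simp
next
  case c2
  have n: "n < p" using ok ok_lt by blast
  let ?m = "Suc n mod p"
  have m: "?m < p" using p1 by simp
  have okm: "ok ?m []" using ok_cyc m by blast
  have am: "aa ?m = W ! ?m" using aa_lt m by blast
  have an: "aa n = W ! n" using aa_lt n by blast
  have pm: "(?m + p - 1) mod p = n" using mod_suc_pred n by blast
  have "step (enc (?m, [])) (inv X a) = enc (n, w)" using okm
  proof (cases rule: step_cases[where a = "inv X a"])
    case (c1 w' b) then show ?thesis by simp
  next
    case c2' : c2 then show ?thesis using nb_lab[OF n] am an \<open>a = aa n\<close> by simp
  next
    case c3 then show ?thesis using pm \<open>w = []\<close> by simp
  next
    case c4
    have "aa (?m + p - 1) = aa n" using aa_W pm an by simp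
    then show ?thesis using c4(2) \<open>a = aa n\<close> by simp
  qed
  then show ?thesis using c2(3) by simp
next
  case c3
  have n: "n < p" using ok ok_lt by blast
  let ?m = "(n + p - 1) mod p"
  have m: "?m < p" using p1 by simp
  have okm: "ok ?m []" using ok_cyc m by blast
  have am: "aa (n + p - 1) = W ! ?m" "aa ?m = W ! ?m" using aa_W aa_lt m by auto
  have ia: "inv X a = aa ?m" using c3(3) am inv_inv_W[OF m] by simp
  have pm: "Suc ?m mod p = n" using mod_pred_suc n by blast
  have "step (enc (?m, [])) (aa ?m) = enc (n, w)" using okm
  proof (cases rule: step_cases[where a = "aa ?m"])
    case (c1 w' b) then show ?thesis by simp
  next
    case c2' : c2 then show ?thesis using pm \<open>w = []\<close> by simp
  next
    case c3' : c3 then show ?thesis by simp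
  next
    case c4 then show ?thesis by simp
  qed
  then show ?thesis using c3(4) ia by simp
next
  case c4
  have okw: "ok n (w @ [a])" using ok_snoc[OF ok v c4(1,2)] by blast
  have "step (enc (n, w @ [a])) (inv X a) = enc (n, w)" using okw
  proof (cases rule: step_cases[where a = "inv X a"])
    case (c1 w' b)
    then have "w' = w" by simp
    then show ?thesis using c1(3) by simp
  next
    case c2 then show ?thesis by simp
  next
    case c3 then show ?thesis by simp
  next
    case c4' : c4 then show ?thesis by simp
  qed
  then show ?thesis using c4(3) by simp
qed

lemma H_iff: "e \<in> H \<longleftrightarrow> (\<exists>n w a. ok n w \<and> valid Z g1 z0 (take n W @ w @ [a]) \<and> e = take n W @ w @ [a])"
proof
  assume "e \<in> H"
  then obtain L a where La: "e = L @ [a]" "L \<in> N" "valid Z g1 z0 (L @ [a])" unfolding H_def by blast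
  then obtain n w where "ok n w" "L = take n W @ w" unfolding N_iff enc_simp by blast
  then show "\<exists>n w a. ok n w \<and> valid Z g1 z0 (take n W @ w @ [a]) \<and> e = take n W @ w @ [a]"
    using La by auto
next
  assume "\<exists>n w a. ok n w \<and> valid Z g1 z0 (take n W @ w @ [a]) \<and> e = take n W @ w @ [a]"
  then obtain n w a where o: "ok n w" "valid Z g1 z0 (take n W @ w @ [a])" "e = take n W @ w @ [a]" by blast
  have "take n W @ w \<in> N" using o(1) N_iff enc_simp by metis
  then show "e \<in> H" unfolding H_def using o by auto
qed

lemma H_ne: "e \<in> H \<Longrightarrow> e = butlast e @ [last e]"
  unfolding H_def by auto

lemma wf_U: "wf_graph U"
  unfolding wf_graph_def
proof (intro ballI conjI)
  fix e assume e: "e \<in> harcs U"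
  then obtain n w a where o: "ok n w" "valid Z g1 z0 (take n W @ w @ [a])" "e = take n W @ w @ [a]"
    using H_iff by auto
  have e2: "e = (take n W @ w) @ [a]" using o(3) by simp
  have bl: "butlast e = enc (n, w)" "last e = a" unfolding e2 by (simp_all add: enc_simp del: append_assoc)
  have tN: "step (enc (n, w)) a \<in> N" using step_N[OF o(1,2)] .
  show "src U e \<in> nodes U" using bl o(1) N_iff by auto
  show "tgt U e \<in> nodes U" using bl tN by simp
  have cz: "valid Z g1 z0 W" "walk Z g1 z0 W = z0" using cycZ[of p] by (simp_all add: z0_def)
  have wk: "walk Z g1 z0 (step (enc (n, w)) a) = walk Z g1 z0 (take n W @ w @ [a])"
    using step_walk[OF wfZ mZ uZ cz o(1,2)] .
  have v2: "valid Z g1 z0 ((take n W @ w) @ [a])" using o(2) by simp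
  let ?f = "he Z g1 (walk Z g1 z0 (take n W @ w)) a"
  have f: "?f \<in> harcs Z" "src Z ?f = walk Z g1 z0 (take n W @ w)" "g1 ?f = a" using valid_he[OF uZ v2] by auto
  have "walk Z g1 z0 ((take n W @ w) @ [a]) = tgt Z ?f" unfolding walk_snoc stepG_def ..
  then have wk2: "walk Z g1 z0 (step (enc (n, w)) a) = tgt Z ?f" using wk by simp
  obtain f' where f': "f' \<in> harcs Z" "src Z f' = tgt Z ?f" "g1 f' = inv X a" using retract(1)[OF wfZ mZ uZ f(1)] f(3) by auto
  have "valid Z g1 z0 (step (enc (n, w)) a @ [inv X a])"
    unfolding valid_snoc using N_valid[OF tN] f' wk2 by auto
  then have "step (enc (n, w)) a @ [inv X a] \<in> H" using tN unfolding H_def by blast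
  then show "inv U e \<in> harcs U" using bl by simp
  have aX: "a \<in> harcs X" using label_X v2 by blast
  show "inv U (inv U e) = e" using bl step_inv[OF o(1,2)] inv_inv_X[OF aX] o(3) by (simp add: enc_simp)
  show "src U (inv U e) = tgt U e" by simp
qed


lemma z0_nodes: "z0 \<in> nodes Z"
  using dm p1 unfolding morphism_def z0_def by auto

lemma cz: "valid Z g1 z0 W" "walk Z g1 z0 W = z0" using cycZ[of p] by (simp_all add: z0_def)

lemma Nil_N: "[] \<in> N" using ok_cyc[of 0] p1 N_iff enc_simp by (metis append_Nil take_0 less_le_trans zero_less_one)

lemma kk_hom:
  assumes wfG: "wf_graph G" and cG: "covering G X l0 l" and nlG: "\<not> has_loop G"
    and v0: "v0 \<in> nodes G" and lv: "l0 v0 = g0 z0"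
    and vW: "valid G l v0 W" and cW: "walk G l v0 W = v0"
    and vN: "\<And>L. L \<in> N \<Longrightarrow> valid G l v0 L"
    and vH: "\<And>L a. L \<in> N \<Longrightarrow> valid Z g1 z0 (L @ [a]) \<longleftrightarrow> valid G l v0 (L @ [a])"
  shows "kk G l v0 \<in> homC U u0 last G l0 l"
proof -
  have mG: "morphism G X l0 l" using cG unfolding covering_def by blast
  have uG: "uniq G l" using uniq_cov[OF wfG cG nlG] .
  define k0 where "k0 = restrict (walk G l v0) N"
  define k1 where "k1 = restrict (\<lambda>e. he G l (walk G l v0 (butlast e)) (last e)) H"
  have kk: "kk G l v0 = (k0, k1)" unfolding kk_def k0_def k1_def ..
  have eH: "k1 e \<in> harcs G \<and> src G (k1 e) = k0 (butlast e) \<and> l (k1 e) = last e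
      \<and> tgt G (k1 e) = k0 (tgt U e) \<and> inv G (k1 e) = k1 (inv U e)" if e: "e \<in> H" for e
  proof -
    obtain n w a where o: "ok n w" "valid Z g1 z0 (take n W @ w @ [a])" "e = take n W @ w @ [a]"
      using H_iff e by auto
    let ?L = "take n W @ w"
    have LN: "?L \<in> N" using o(1) N_iff enc_simp by metis
    have bl: "butlast e = ?L" "last e = a" using o(3) by (simp_all add: butlast_append)
    have vG: "valid G l v0 (?L @ [a])" using vH[OF LN] o(2) by simp
    let ?f = "he G l (walk G l v0 ?L) a"
    have f: "?f \<in> harcs G" "src G ?f = walk G l v0 ?L" "l ?f = a" using valid_he[OF uG vG] by auto
    have k1e: "k1 e = ?f" unfolding k1_def using e bl by simp
    have sN: "step ?L a \<in> N" using step_N[OF o(1,2)] enc_simp by simp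
    have tU: "tgt U e = step ?L a" using bl by simp
    have "walk G l v0 (step ?L a) = walk G l v0 (?L @ [a])"
      using step_walk[OF wfG mG uG vW cW o(1)] vG enc_simp by simp
    then have tg: "k0 (tgt U e) = tgt G ?f" unfolding tU k0_def using sN by (simp add: stepG_def)
    have iU: "inv U e = step ?L a @ [inv X a]" using bl by simp
    have iH: "inv U e \<in> H" using wf_U e unfolding wf_graph_def by auto
    have fi: "inv G ?f \<in> harcs G" "src G (inv G ?f) = tgt G ?f" "l (inv G ?f) = inv X a"
      using wfG mG f unfolding wf_graph_def morphism_def by metis+
    have "k1 (inv U e) = he G l (walk G l v0 (step ?L a)) (inv X a)" unfolding k1_def using iH iU by simp
    also have "\<dots> = he G l (tgt G ?f) (inv X a)" using tg sN unfolding tU k0_def by simp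
    also have "\<dots> = inv G ?f" using he_eq[OF uG fi] by simp
    finally have "k1 (inv U e) = inv G ?f" .
    then show ?thesis using f k1e bl tg LN unfolding k0_def by simp
  qed
  have m: "morphism U G k0 k1"
    unfolding morphism_def
  proof (intro conjI ballI)
    fix v assume "v \<in> nodes U"
    then show "k0 v \<in> nodes G" unfolding k0_def using valid_nodes[OF wfG uG v0 vN] by simp
  next
    fix e assume "e \<in> harcs U"
    then have e: "e \<in> H" by simp
    show "k1 e \<in> harcs G" "src G (k1 e) = k0 (src U e)" "tgt G (k1 e) = k0 (tgt U e)" "inv G (k1 e) = k1 (inv U e)"
      using eH[OF e] by simp_all
  qed
  have cov: "covering U G k0 k1"
  proof (rule star_cov[OF wf_U wfG m nlG])
    fix v e' assume v: "v \<in> nodes U" and e': "e' \<in> harcs G" "src G e' = k0 v"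
    then have vN': "v \<in> N" by simp
    let ?a = "l e'"
    have "valid G l v0 (v @ [?a])" unfolding valid_snoc using vN[OF vN'] e' vN' unfolding k0_def by auto
    then have vZ: "valid Z g1 z0 (v @ [?a])" using vH[OF vN'] by simp
    then have eH': "v @ [?a] \<in> H" using vN' unfolding H_def by blast
    have "k1 (v @ [?a]) = he G l (walk G l v0 v) ?a" unfolding k1_def using eH' by simp
    also have "\<dots> = e'" using he_eq[OF uG e'(1)] e'(2) vN' unfolding k0_def by simp
    finally show "\<exists>e\<in>harcs U. src U e = v \<and> k1 e = e'" using eH' by (intro bexI[of _ "v @ [?a]"]) auto
  next
    fix e1 e2 assume e: "e1 \<in> harcs U" "e2 \<in> harcs U" "src U e1 = src U e2" "k1 e1 = k1 e2"
    have "last e1 = last e2" using eH[of e1] eH[of e2] e by auto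
    then show "e1 = e2" using e H_ne by (metis U_simps(2,3))
  qed
  have lab0: "l0 (k0 v) = u0 v" if v: "v \<in> nodes U" for v
  proof (cases "v = []")
    case True then show ?thesis using Nil_N lv unfolding k0_def u0_def by simp
  next
    case False
    have vN': "v \<in> N" using v by simp
    have "l0 (walk G l v0 v) = tgt X (last v)" using label_end[OF mG uG vN[OF vN'] False] .
    moreover have "g0 (walk Z g1 z0 v) = tgt X (last v)" using label_end[OF mZ uZ N_valid[OF vN'] False] .
    ultimately show ?thesis using vN' unfolding k0_def u0_def by simp
  qed
  have lab1: "l (k1 e) = last e" if "e \<in> harcs U" for e using eH that by simp
  show ?thesis unfolding kk homC_def using cov lab0 lab1 by (simp add: k0_def k1_def)
qed

end


context unf begin

lemma ok_take:
  assumes ok: "ok n w" shows "ok n (take j w)"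
proof -
  have o: "n < p" "valid Z g1 z0 (take n W @ w)" "reduced w"
     "w \<noteq> [] \<longrightarrow> hd w \<noteq> aa n \<and> hd w \<noteq> inv X (aa (n + p - 1))"
    using ok unfolding ok_def by auto
  have "valid Z g1 z0 (take n W @ take j w)"
    using valid_prefix[of Z g1 z0 "take n W @ take j w" "drop j w"] o(2) by simp
  moreover have "reduced (take j w)" using reduced_take[OF o(3)] .
  moreover have "take j w \<noteq> [] \<longrightarrow> hd (take j w) \<noteq> aa n \<and> hd (take j w) \<noteq> inv X (aa (n + p - 1))"
    using o(4) by (cases w; cases j) auto
  ultimately show ?thesis using o(1) unfolding ok_def by blast
qed

lemma prefix_N:
  assumes L: "L \<in> N" and i: "i < length L"
  shows "take i L \<in> N \<and> take i L @ [L ! i] \<in> H \<and> step (take i L) (L ! i) = take (Suc i) L"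
proof -
  obtain n w where o: "ok n w" "L = take n W @ w" using L N_iff enc_simp by metis
  have n: "n < p" using o(1) ok_lt by blast
  show ?thesis
  proof (cases "i < n")
    case True
    have tk: "take i L = take i W" "L ! i = W ! i" "take (Suc i) L = take (Suc i) W"
      using True n o(2) by (simp_all add: nth_append min_def)
    have oki: "ok i []" using ok_cyc True n by simp
    have N1: "take i W \<in> N" using oki N_iff enc_simp by (metis append_Nil2)
    have "valid Z g1 z0 (take (Suc i) W)" using cycZ[of "Suc i"] True n by simp
    then have "valid Z g1 z0 (take i W @ [W ! i])" using True n by (simp add: take_Suc_conv_app_nth)
    then have H1: "take i W @ [W ! i] \<in> H" using N1 unfolding H_def by blast
    have "step (enc (i, [])) (W ! i) = take (Suc i) W" using oki
    proof (cases rule: step_cases[where a = "W ! i"])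
      case (c1 w' b) then show ?thesis by simp
    next
      case c2 then show ?thesis using True n by (simp add: enc_simp)
    next
      case c3 then show ?thesis using aa_lt True n by simp
    next
      case c4 then show ?thesis using aa_lt True n by simp
    qed
    then show ?thesis using tk N1 H1 by (simp add: enc_simp)
  next
    case False
    define j where "j = i - n"
    have ij: "i = n + j" using False j_def by simp
    have jw: "j < length w" using i o(2) ij n by simp
    have tk: "take i L = take n W @ take j w" "L ! i = w ! j" "take (Suc i) L = take n W @ take (Suc j) w"
      using ij n o(2) by (simp_all add: nth_append)
    have okj: "ok n (take j w)" using ok_take[OF o(1)] .
    have okj1: "ok n (take (Suc j) w)" using ok_take[OF o(1)] .
    have ts: "take (Suc j) w = take j w @ [w ! j]" using jw by (simp add: take_Suc_conv_app_nth)
    have N1: "take n W @ take j w \<in> N" using okj N_iff enc_simp by metis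
    have "valid Z g1 z0 (take n W @ take j w @ [w ! j])" using ok_valid[OF okj1] ts by simp
    then have H1: "take n W @ take j w @ [w ! j] \<in> H" using N1 unfolding H_def by auto
    have ow: "reduced w" "w \<noteq> [] \<longrightarrow> hd w \<noteq> aa n \<and> hd w \<noteq> inv X (aa (n + p - 1))" using o(1) unfolding ok_def by auto
    have "step (enc (n, take j w)) (w ! j) = take n W @ take (Suc j) w" using okj
    proof (cases rule: step_cases[where a = "w ! j"])
      case (c1 w' b)
      then have j0: "j > 0" by (cases j) auto
      have "b = w ! (j - 1)" using c1(1) jw j0
        by (metis One_nat_def diff_Suc_less last_snoc last_conv_nth length_take min.absorb4 nth_take snoc_eq_iff_butlast
            less_imp_diff_less diff_less zero_less_one length_greater_0_conv)
      then show ?thesis using ow(1) c1(2) j0 jw unfolding reduced_def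
        by (metis Suc_pred')
    next
      case c2
      then have "j = 0" using jw by (cases j) auto
      then show ?thesis using c2 ow(2) jw by (cases w) auto
    next
      case c3
      then have "j = 0" using jw by (cases j) auto
      then show ?thesis using c3 ow(2) jw by (cases w) auto
    next
      case c4 then show ?thesis using ts by (simp add: enc_simp)
    qed
    then show ?thesis using tk N1 H1 by (simp add: enc_simp)
  qed
qed

lemma hom_unique:
  assumes wfG: "wf_graph G" and cG: "covering G X l0 l" and nlG: "\<not> has_loop G"
    and k: "(k0, k1) \<in> homC U u0 last G l0 l"
  shows "(k0, k1) = kk G l (k0 [])"
proof -
  have uG: "uniq G l" using uniq_cov[OF wfG cG nlG] .
  have kc: "k0 \<in> extensional N" "k1 \<in> extensional H" "covering U G k0 k1"
    "\<And>e. e \<in> H \<Longrightarrow> l (k1 e) = last e"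
    using k unfolding homC_def by auto
  have m: "morphism U G k0 k1" using kc(3) unfolding covering_def by blast
  have me: "k1 e \<in> harcs G \<and> src G (k1 e) = k0 (butlast e) \<and> tgt G (k1 e) = k0 (step (butlast e) (last e))"
    if "e \<in> H" for e using m that unfolding morphism_def by simp
  have he1: "k1 e = he G l (k0 (butlast e)) (last e)" if e: "e \<in> H" for e
    using he_eq[OF uG] me[OF e] kc(4)[OF e] by metis
  have wk: "k0 (take i L) = walk G l (k0 []) (take i L)" if L: "L \<in> N" and i: "i \<le> length L" for L i
    using i
  proof (induction i)
    case 0 then show ?case by simp
  next
    case (Suc i)
    then have il: "i < length L" by simp
    note P = prefix_N[OF L il]
    let ?e = "take i L @ [L ! i]"
    have "k0 (take (Suc i) L) = tgt G (k1 ?e)" using me[of ?e] P by simp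
    also have "\<dots> = tgt G (he G l (k0 (take i L)) (L ! i))" using he1[of ?e] P by simp
    also have "\<dots> = walk G l (k0 []) (take (Suc i) L)" using Suc.IH il by (simp add: take_Suc_conv_app_nth stepG_def)
    finally show ?case .
  qed
  have w0: "k0 L = walk G l (k0 []) L" if "L \<in> N" for L using wk[OF that, of "length L"] by simp
  have "k0 = restrict (walk G l (k0 [])) N"
  proof
    fix L show "k0 L = restrict (walk G l (k0 [])) N L"
      using w0 kc(1) by (cases "L \<in> N") (auto simp: extensional_def)
  qed
  moreover have "k1 = restrict (\<lambda>e. he G l (walk G l (k0 []) (butlast e)) (last e)) H"
  proof
    fix e show "k1 e = restrict (\<lambda>e. he G l (walk G l (k0 []) (butlast e)) (last e)) H e"
    proof (cases "e \<in> H")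
      case True
      have "butlast e \<in> N" using True unfolding H_def by auto
      then show ?thesis using he1[OF True] w0 True by simp
    next
      case False then show ?thesis using kc(2) by (simp add: extensional_def)
    qed
  qed
  ultimately show ?thesis unfolding kk_def by simp
qed

end


lemma gmod: "0 < (q::nat) \<Longrightarrow> n < q \<Longrightarrow> Suc ((n + q - 1) mod q) mod q = n"
proof (cases n)
  case 0
  assume q: "0 < q"
  then have "(n + q - 1) mod q = q - 1" using 0 by simp
  then show ?thesis using 0 q by simp
next
  case (Suc k)
  assume q: "0 < q" and n: "n < q"
  then have "(n + q - 1) mod q = k" using Suc by simp
  then show ?thesis using Suc n by simp
qed

context unf begin

lemma d1F_label: "n < p \<Longrightarrow> g1 (d1 (n, False)) = inv X (W ! n)"
proof -
  assume n: "n < p"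
  note A = d1_props[OF n]
  have e: "d1 (n, True) \<in> harcs Z" using A by simp
  have "inv X (g1 (d1 (n, True))) = g1 (inv Z (d1 (n, True)))" using mZ e unfolding morphism_def by blast
  then show ?thesis using A nthW[OF n] by simp
qed

lemma step_fwd: "n < p \<Longrightarrow> step (take n W) (W ! n) = take (Suc n mod p) W"
proof -
  assume n: "n < p"
  have ok: "ok n []" using ok_cyc n .
  have "step (enc (n, [])) (W ! n) = enc (Suc n mod p, [])" using ok
  proof (cases rule: step_cases[where a = "W ! n"])
    case (c1 w' b) then show ?thesis by simp
  next
    case c2 then show ?thesis by simp
  next
    case c3 then show ?thesis using aa_lt n by simp
  next
    case c4 then show ?thesis using aa_lt n by simp
  qed
  then show ?thesis by (simp add: enc_simp)
qed

lemma step_bwd: "n < p \<Longrightarrow> step (take (Suc n mod p) W) (inv X (W ! n)) = take n W"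
proof -
  assume n: "n < p"
  let ?m = "Suc n mod p"
  have m: "?m < p" using p1 by simp
  have ok: "ok ?m []" using ok_cyc m .
  have pm: "(?m + p - 1) mod p = n" using mod_suc_pred n by blast
  have am: "aa (?m + p - 1) = W ! n" using aa_W pm by simp
  have "step (enc (?m, [])) (inv X (W ! n)) = enc (n, [])" using ok
  proof (cases rule: step_cases[where a = "inv X (W ! n)"])
    case (c1 w' b) then show ?thesis by simp
  next
    case c2 then show ?thesis using nb_lab[OF n] aa_lt[OF m] by simp
  next
    case c3 then show ?thesis using pm by simp
  next
    case c4 then show ?thesis using am by simp
  qed
  then show ?thesis by (simp add: enc_simp)
qed

lemma take_W_N: "n < p \<Longrightarrow> take n W \<in> N"
  using ok_cyc N_iff enc_simp by (metis append_Nil2)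

lemma phi1_H: assumes n: "n < p" shows "phi1 (n, True) \<in> H" "phi1 (n, False) \<in> H"
proof -
  have "valid Z g1 z0 (take (Suc n) W)" using cycZ[of "Suc n"] n by simp
  then have "valid Z g1 z0 (take n W @ [W ! n])" using n by (simp add: take_Suc_conv_app_nth)
  then show "phi1 (n, True) \<in> H" using take_W_N[OF n] unfolding H_def phi1_def by auto
  let ?m = "Suc n mod p"
  have m: "?m < p" using p1 by simp
  have cw: "valid Z g1 z0 (take ?m W)" "walk Z g1 z0 (take ?m W) = d0 ?m" using cycZ[of ?m] m by auto
  note A = d1_props[OF n]
  have "valid Z g1 z0 (take ?m W @ [inv X (W ! n)])" unfolding valid_snoc
    using cw A d1F_label[OF n] by auto
  then show "phi1 (n, False) \<in> H" using take_W_N[OF m] unfolding H_def phi1_def by auto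
qed

lemma phi_morph: "morphism (cyc p) U phi0 phi1"
  unfolding morphism_def
proof (intro conjI ballI)
  fix v assume "v \<in> nodes (cyc p)"
  then show "phi0 v \<in> nodes U" using take_W_N unfolding phi0_def by simp
next
  fix u assume "u \<in> harcs (cyc p)"
  then obtain n b where u: "u = (n, b)" "n < p" by auto
  have m: "Suc n mod p < p" using p1 by simp
  have ii: "inv X (inv X (W ! n)) = W ! n" using inv_inv_W u(2) .
  show "phi1 u \<in> harcs U" using phi1_H u by (cases b) auto
  show "src U (phi1 u) = phi0 (src (cyc p) u)" using u by (cases b) (auto simp: phi1_def phi0_def)
  show "tgt U (phi1 u) = phi0 (tgt (cyc p) u)" using u step_fwd step_bwd by (cases b) (auto simp: phi1_def phi0_def)
  show "inv U (phi1 u) = phi1 (inv (cyc p) u)" using u step_fwd step_bwd ii by (cases b) (auto simp: phi1_def phi0_def)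
qed

lemma phi_inj0: "inj_on phi0 (nodes (cyc p))"
  by (rule inj_onI) (auto simp: phi0_def dest: arg_cong[where f = length])

lemma phi_inj1: "inj_on phi1 (harcs (cyc p))"
proof (rule inj_onI)
  fix u v assume u: "u \<in> harcs (cyc p)" and v: "v \<in> harcs (cyc p)" and e: "phi1 u = phi1 v"
  obtain n b where un: "u = (n, b)" "n < p" using u by auto
  obtain m c where vm: "v = (m, c)" "m < p" using v by auto
  have mn: "Suc n mod p < p" "Suc m mod p < p" using p1 by auto
  have L: "length (phi1 u) = length (phi1 v)" "last (phi1 u) = last (phi1 v)" using e by auto
  show "u = v"
  proof (cases b; cases c)
    assume "b" "c" then show ?thesis using L un vm by (simp add: phi1_def)
  next
    assume "\<not> b" "\<not> c"
    then have "Suc n mod p = Suc m mod p" using L un vm mn by (simp add: phi1_def)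
    then have "n = m" using mod_suc_pred un(2) vm(2) by metis
    then show ?thesis using un vm \<open>\<not> b\<close> \<open>\<not> c\<close> by simp
  next
    assume "b" "\<not> c"
    then have "n = Suc m mod p" "W ! n = inv X (W ! m)" using L un vm mn by (simp_all add: phi1_def)
    then show ?thesis using nb_lab[OF vm(2)] by simp
  next
    assume "\<not> b" "c"
    then have "m = Suc n mod p" "W ! m = inv X (W ! n)" using L un vm mn by (simp_all add: phi1_def)
    then show ?thesis using nb_lab[OF un(2)] by simp
  qed
qed


definition "HC = phi1 ` harcs (cyc p)"
definition "U' = U\<lparr>harcs := H - HC\<rparr>"

lemma U'_simps[simp]: "nodes U' = N" "harcs U' = H - HC" "src U' = butlast" "tgt U' e = step (butlast e) (last e)"
  "inv U' e = step (butlast e) (last e) @ [inv X (last e)]"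
  by (simp_all add: U'_def U_def)

lemma U'_edge:
  assumes e: "e \<in> H" "e \<notin> HC"
  obtains n w where "ok n w" "butlast e = enc (n, w)"
    "(\<exists>w' b. w = w' @ [b] \<and> last e = inv X b \<and> step (butlast e) (last e) = enc (n, w') \<and> ok n w')
     \<or> (ok n (w @ [last e]) \<and> step (butlast e) (last e) = enc (n, w @ [last e]))"
proof -
  obtain n w a where o: "ok n w" "valid Z g1 z0 (take n W @ w @ [a])" "e = take n W @ w @ [a]"
    using H_iff e(1) by auto
  have bl: "butlast e = enc (n, w)" "last e = a" using o(3) by (simp_all add: butlast_append enc_simp)
  have n: "n < p" using o(1) ok_lt by blast
  show ?thesis using o(1)
  proof (cases rule: step_cases[where a = a])
    case (c1 w' b)
    have "ok n w'" using ok_butlast o(1) c1(1) by blast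
    then have "\<exists>w' b. w = w' @ [b] \<and> last e = inv X b \<and> step (butlast e) (last e) = enc (n, w') \<and> ok n w'"
      using c1 bl by auto
    then show ?thesis using that[OF o(1) bl(1)] by blast
  next
    case c2
    have "e = phi1 (n, True)" using o(3) c2 aa_lt n by (simp add: phi1_def)
    then have "e \<in> HC" using n unfolding HC_def by auto
    then show ?thesis using e(2) by blast
  next
    case c3
    let ?m = "(n + p - 1) mod p"
    have m: "?m < p" using p1 by simp
    have "e = phi1 (?m, False)" using o(3) c3 aa_W mod_pred_suc n by (simp add: phi1_def)
    then have "e \<in> HC" using m unfolding HC_def by auto
    then show ?thesis using e(2) by blast
  next
    case c4
    have "ok n (w @ [a])" using ok_snoc[OF o(1,2) c4(1,2)] .
    then have "ok n (w @ [last e]) \<and> step (butlast e) (last e) = enc (n, w @ [last e])" using bl c4(3) by simp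
    then show ?thesis using that[OF o(1) bl(1)] by blast
  qed
qed

lemma forest_U': "forest U'"
  unfolding forest_def
proof (intro allI impI)
  fix q :: nat assume q: "q \<ge> 1"
  show "nb_cycles q U' = {}"
  proof (rule ccontr)
    assume "nb_cycles q U' \<noteq> {}"
    then obtain c0 c1 where cm: "morphism (cyc q) U' c0 c1" and nb: "\<not> backtracking q c1"
      unfolding nb_cycles_def p_cycles_def by auto
    have cmu: "\<forall>u\<in>harcs (cyc q). c1 u \<in> harcs U' \<and> src U' (c1 u) = c0 (src (cyc q) u)
        \<and> tgt U' (c1 u) = c0 (tgt (cyc q) u) \<and> inv U' (c1 u) = c1 (inv (cyc q) u)"
      using cm unfolding morphism_def by blast
    define f where "f i = length (snd (dec (c0 i)))" for i
    define M where "M = Max (f ` {0..<q})"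
    have fin: "finite (f ` {0..<q})" "f ` {0..<q} \<noteq> {}" using q by auto
    obtain n0 where n0: "n0 < q" "f n0 = M" using Max_in[OF fin] M_def by auto
    have mx: "f i \<le> f n0" if "i < q" for i using Max_ge[OF fin(1)] that n0(2) M_def by auto
    define m where "m = (n0 + q - 1) mod q"
    have mq: "m < q" using q by (simp add: m_def)
    have sm: "Suc m mod q = n0" using gmod[of q n0] q n0(1) by (simp add: m_def)
    let ?e1 = "c1 (m, True)" and ?e2 = "c1 (n0, True)"
    have E1: "?e1 \<in> H" "?e1 \<notin> HC" "butlast ?e1 = c0 m" "step (butlast ?e1) (last ?e1) = c0 n0"
      "c1 (m, False) = step (butlast ?e1) (last ?e1) @ [inv X (last ?e1)]"
      using cmu[rule_format, of "(m, True)"] mq sm by auto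
    have sq: "Suc n0 mod q < q" using q by simp
    have E2: "?e2 \<in> H" "?e2 \<notin> HC" "butlast ?e2 = c0 n0" "step (butlast ?e2) (last ?e2) = c0 (Suc n0 mod q)"
      using cmu[rule_format, of "(n0, True)"] n0(1) by auto
    obtain n w where o1: "ok n w" "butlast ?e1 = enc (n, w)"
      and d1: "(\<exists>w' b. w = w' @ [b] \<and> last ?e1 = inv X b \<and> step (butlast ?e1) (last ?e1) = enc (n, w') \<and> ok n w')
     \<or> (ok n (w @ [last ?e1]) \<and> step (butlast ?e1) (last ?e1) = enc (n, w @ [last ?e1]))"
      using U'_edge[OF E1(1,2)] by blast
    have c0m: "c0 m = enc (n, w)" using E1(3) o1(2) by simp
    have fm: "f m = length w" unfolding f_def c0m dec_enc[OF o1(1)] by simp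
    have inc: "ok n (w @ [last ?e1]) \<and> c0 n0 = enc (n, w @ [last ?e1])"
    proof -
      { assume "\<exists>w' b. w = w' @ [b] \<and> last ?e1 = inv X b \<and> step (butlast ?e1) (last ?e1) = enc (n, w') \<and> ok n w'"
        then obtain w' b where "w = w' @ [b]" "c0 n0 = enc (n, w')" "ok n w'" using E1(4) by auto
        then have "f n0 < f m" using fm dec_enc[OF \<open>ok n w'\<close>] unfolding f_def by simp
        then have False using mx[OF mq] by simp }
      then show ?thesis using d1 E1(4) by auto
    qed
    obtain n' w2 where o2: "ok n' w2" "butlast ?e2 = enc (n', w2)"
      and d2: "(\<exists>w' b. w2 = w' @ [b] \<and> last ?e2 = inv X b \<and> step (butlast ?e2) (last ?e2) = enc (n', w') \<and> ok n' w')
     \<or> (ok n' (w2 @ [last ?e2]) \<and> step (butlast ?e2) (last ?e2) = enc (n', w2 @ [last ?e2]))"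
      using U'_edge[OF E2(1,2)] by blast
    have "enc (n', w2) = enc (n, w @ [last ?e1])" using o2(2) E2(3) inc by simp
    then have nw: "n' = n" "w2 = w @ [last ?e1]"
      using enc_inj inc o2(1) unfolding inj_on_def S_def by auto
    have fn0: "f n0 = Suc (length w)" using inc dec_enc[of n "w @ [last ?e1]"] unfolding f_def by simp
    have dec2: "last ?e2 = inv X (last ?e1)"
    proof -
      { assume a: "ok n' (w2 @ [last ?e2]) \<and> step (butlast ?e2) (last ?e2) = enc (n', w2 @ [last ?e2])"
        then have "f (Suc n0 mod q) = Suc (Suc (length w))" using E2(4) nw dec_enc[of n' "w2 @ [last ?e2]"] unfolding f_def by simp
        then have False using mx[OF sq] fn0 by simp }
      then obtain w' b where "w2 = w' @ [b]" "last ?e2 = inv X b" using d2 by blast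
      then show ?thesis using nw by simp
    qed
    have "?e2 = butlast ?e2 @ [last ?e2]" using H_ne E2(1) by blast
    also have "\<dots> = c0 n0 @ [inv X (last ?e1)]" using E2(3) dec2 by simp
    also have "\<dots> = c1 (m, False)" using E1(4,5) by simp
    finally have "c1 (Suc m mod q, True) = c1 (m, False)" using sm by simp
    then have "backtracking q c1" unfolding backtracking_def using mq by blast
    then show False using nb by blast
  qed
qed

lemma conn_idx:
  assumes "(x, y) \<in> conn U'" "x \<in> N"
  shows "y \<in> N \<and> fst (dec y) = fst (dec x)"
  using assms(1) unfolding conn_def
proof (induction rule: rtrancl_induct)
  case base then show ?case using assms(2) by simp
next
  case (step y z)
  then obtain u where u: "u \<in> H - HC" "butlast u = y" "step (butlast u) (last u) = z" by auto
  obtain n w where o: "ok n w" "butlast u = enc (n, w)"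
    and d: "(\<exists>w' b. w = w' @ [b] \<and> last u = inv X b \<and> step (butlast u) (last u) = enc (n, w') \<and> ok n w')
     \<or> (ok n (w @ [last u]) \<and> step (butlast u) (last u) = enc (n, w @ [last u]))"
    using U'_edge[of u] u(1) by blast
  obtain w'' where w'': "ok n w''" "z = enc (n, w'')" using d u(3) by blast
  have "z \<in> N" using w'' N_iff by blast
  moreover have "fst (dec z) = fst (dec y)" using w'' o u(2) dec_enc by simp
  ultimately show ?case using step.IH by simp
qed

lemma conn_ex: "ok n w \<Longrightarrow> (enc (n, w), take n W) \<in> conn U'"
proof (induction w rule: rev_induct)
  case Nil then show ?case by (simp add: enc_simp conn_def)
next
  case (snoc b w')
  have okw': "ok n w'" using ok_butlast snoc.prems by blast
  let ?x = "enc (n, w' @ [b])"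
  let ?u = "?x @ [inv X b]"
  have xN: "?x \<in> N" using snoc.prems N_iff by blast
  have "valid Z g1 z0 ((take n W @ w') @ [b])" using ok_valid[OF snoc.prems] by simp
  then have "valid Z g1 z0 ((take n W @ w') @ [b, inv X b])" using retract_walk[OF wfZ mZ uZ] by blast
  then have uH: "?u \<in> H" using xN unfolding H_def by (auto simp: enc_simp)
  have uHC: "?u \<notin> HC"
  proof
    assume "?u \<in> HC"
    then obtain j c where j: "j < p" "?u = phi1 (j, c)" unfolding HC_def by auto
    have "\<exists>j'. j' < p \<and> butlast ?u = enc (j', [])"
    proof (cases c)
      case True then show ?thesis using j by (auto simp: phi1_def enc_simp)
    next
      case False
      have "Suc j mod p < p" using p1 by simp
      moreover have "butlast ?u = enc (Suc j mod p, [])" using j False by (simp add: phi1_def enc_simp)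
      ultimately show ?thesis by blast
    qed
    then obtain j' where j': "j' < p" "?x = enc (j', [])" by auto
    then have "(n, w' @ [b]) = (j', [])" using enc_inj snoc.prems ok_cyc[OF j'(1)] unfolding inj_on_def S_def by blast
    then show False by simp
  qed
  have st: "step ?x (inv X b) = enc (n, w')" using snoc.prems
  proof (cases rule: step_cases[where a = "inv X b"])
    case (c1 w'' b'') then show ?thesis by simp
  next
    case c2 then show ?thesis by simp
  next
    case c3 then show ?thesis by simp
  next
    case c4 then show ?thesis by simp
  qed
  have "(?x, enc (n, w')) \<in> {(x, y). \<exists>u\<in>harcs U'. src U' u = x \<and> tgt U' u = y}"
    using uH uHC st by (intro CollectI, simp, intro bexI[of _ ?u]) auto
  then show ?case using snoc.IH[OF okw'] unfolding conn_def by (rule converse_rtrancl_into_rtrancl)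
qed

lemma conn_cond: "x \<in> nodes U \<Longrightarrow> \<exists>!c. c \<in> phi0 ` nodes (cyc p) \<and> (x, c) \<in> conn U'"
proof -
  assume "x \<in> nodes U"
  then obtain n w where o: "ok n w" "x = enc (n, w)" using N_iff by auto
  have n: "n < p" using o(1) ok_lt by blast
  have ex: "take n W \<in> phi0 ` nodes (cyc p) \<and> (x, take n W) \<in> conn U'"
    using conn_ex[OF o(1)] o(2) n unfolding phi0_def by auto
  show ?thesis
  proof (rule ex1I[of _ "take n W"])
    show "take n W \<in> phi0 ` nodes (cyc p) \<and> (x, take n W) \<in> conn U'" using ex .
  next
    fix c assume c: "c \<in> phi0 ` nodes (cyc p) \<and> (x, c) \<in> conn U'"
    then obtain j where j: "j < p" "c = take j W" unfolding phi0_def by auto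
    have xN: "x \<in> N" using o N_iff by blast
    have "fst (dec c) = fst (dec x)" using conn_idx[OF _ xN] c by blast
    moreover have "dec c = (j, [])" using j dec_enc[OF ok_cyc[OF j(1)]] by (simp add: enc_simp)
    moreover have "dec x = (n, w)" using o dec_enc by simp
    ultimately show "c = take n W" using j by simp
  qed
qed

lemma kkZ: "kk Z g1 z0 \<in> homC U u0 last Z g0 g1"
proof -
  have vH: "\<And>L a. L \<in> N \<Longrightarrow> valid Z g1 z0 (L @ [a]) \<longleftrightarrow> valid Z g1 z0 (L @ [a])" by simp
  show ?thesis using kk_hom[OF wfZ covZ nlZ z0_nodes refl cz N_valid vH] .
qed

lemma covUX: "covering U X u0 last"
proof -
  have h: "covering U Z (fst (kk Z g1 z0)) (snd (kk Z g1 z0))"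
    "\<And>v. v \<in> nodes U \<Longrightarrow> g0 (fst (kk Z g1 z0) v) = u0 v"
    "\<And>e. e \<in> harcs U \<Longrightarrow> g1 (snd (kk Z g1 z0) e) = last e"
    using kkZ unfolding homC_def by auto
  show ?thesis by (rule cov_trans[OF wf_U h(1) covZ]) (use h in auto)
qed

lemma in_R_U: "in_R p X U u0 last"
  unfolding in_R_def Let_def
proof (intro conjI exI[of _ phi0] exI[of _ phi1] wf_U covUX phi_morph phi_inj0 phi_inj1)
  have eq: "U\<lparr>harcs := harcs U - phi1 ` harcs (cyc p)\<rparr> = U'" unfolding U'_def HC_def by simp
  show "forest (U\<lparr>harcs := harcs U - phi1 ` harcs (cyc p)\<rparr>)" unfolding eq by (rule forest_U')
  show "\<forall>x\<in>nodes U. \<exists>!c. c \<in> phi0 ` nodes (cyc p) \<and> (x, c) \<in> conn (U\<lparr>harcs := harcs U - phi1 ` harcs (cyc p)\<rparr>)"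
    unfolding eq using conn_cond by blast
qed

end


lemma wf_cyc: "p \<ge> 1 \<Longrightarrow> wf_graph (cyc p)"
  unfolding wf_graph_def by auto

lemma morph_comp:
  assumes wfA: "wf_graph A" and m1: "morphism A B f0 f1" and m2: "morphism B C g0 g1"
  shows "morphism A C (restrict (g0 \<circ> f0) (nodes A)) (restrict (g1 \<circ> f1) (harcs A))"
  unfolding morphism_def
proof (intro conjI ballI)
  fix v assume "v \<in> nodes A" then show "restrict (g0 \<circ> f0) (nodes A) v \<in> nodes C"
    using m1 m2 unfolding morphism_def by auto
next
  fix u assume u: "u \<in> harcs A"
  have s: "src A u \<in> nodes A" "tgt A u \<in> nodes A" "inv A u \<in> harcs A" using wfA u unfolding wf_graph_def by auto
  show "restrict (g1 \<circ> f1) (harcs A) u \<in> harcs C"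
    "src C (restrict (g1 \<circ> f1) (harcs A) u) = restrict (g0 \<circ> f0) (nodes A) (src A u)"
    "tgt C (restrict (g1 \<circ> f1) (harcs A) u) = restrict (g0 \<circ> f0) (nodes A) (tgt A u)"
    "inv C (restrict (g1 \<circ> f1) (harcs A) u) = restrict (g1 \<circ> f1) (harcs A) (inv A u)"
    using m1 m2 u s unfolding morphism_def by auto
qed

lemma lift_walk:
  assumes wfY: "wf_graph Y" and wfZ: "wf_graph Z" and covh: "covering Y Z h0 h1" and nlZ: "\<not> has_loop Z"
    and uY: "uniq Y f1" and uZ: "uniq Z g1" and lab: "\<And>e. e \<in> harcs Y \<Longrightarrow> g1 (h1 e) = f1 e"
    and v: "v \<in> nodes Y"
  shows "(valid Y f1 v w \<longleftrightarrow> valid Z g1 (h0 v) w) \<and>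
     (valid Y f1 v w \<longrightarrow> h0 (walk Y f1 v w) = walk Z g1 (h0 v) w \<and> walk Y f1 v w \<in> nodes Y)"
proof (induction w rule: rev_induct)
  case Nil then show ?case using v by simp
next
  case (snoc a w)
  have mh: "morphism Y Z h0 h1" using covh unfolding covering_def by blast
  show ?case
  proof (cases "valid Y f1 v w")
    case False
    then have "\<not> valid Z g1 (h0 v) w" using snoc.IH by blast
    then show ?thesis using False valid_prefix[of Y f1 v w "[a]"] valid_prefix[of Z g1 "h0 v" w "[a]"] by blast
  next
    case True
    let ?y = "walk Y f1 v w"
    have y: "h0 ?y = walk Z g1 (h0 v) w" "?y \<in> nodes Y" and vz: "valid Z g1 (h0 v) w" using snoc.IH True by auto
    have eqv: "(\<exists>e\<in>harcs Y. src Y e = ?y \<and> f1 e = a) \<longleftrightarrow> (\<exists>e'\<in>harcs Z. src Z e' = h0 ?y \<and> g1 e' = a)"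
    proof
      assume "\<exists>e\<in>harcs Y. src Y e = ?y \<and> f1 e = a"
      then obtain e where e: "e \<in> harcs Y" "src Y e = ?y" "f1 e = a" by blast
      then show "\<exists>e'\<in>harcs Z. src Z e' = h0 ?y \<and> g1 e' = a" using mh lab[OF e(1)] unfolding morphism_def by metis
    next
      assume "\<exists>e'\<in>harcs Z. src Z e' = h0 ?y \<and> g1 e' = a"
      then obtain e' where e': "e' \<in> harcs Z" "src Z e' = h0 ?y" "g1 e' = a" by blast
      obtain e where e: "e \<in> harcs Y" "src Y e = ?y" "h1 e = e'" using lift_cov[OF wfY wfZ covh nlZ y(2) e'(1,2)] by blast
      then show "\<exists>e\<in>harcs Y. src Y e = ?y \<and> f1 e = a" using lab[OF e(1)] e'(3) by metis
    qed
    have iff: "valid Y f1 v (w @ [a]) \<longleftrightarrow> valid Z g1 (h0 v) (w @ [a])"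
      unfolding valid_snoc using True vz eqv y(1) by simp
    have rest: "h0 (walk Y f1 v (w @ [a])) = walk Z g1 (h0 v) (w @ [a]) \<and> walk Y f1 v (w @ [a]) \<in> nodes Y"
      if vv: "valid Y f1 v (w @ [a])"
    proof -
      let ?e = "he Y f1 ?y a"
      have e: "?e \<in> harcs Y" "src Y ?e = ?y" "f1 ?e = a" using valid_he[OF uY vv] by auto
      have e': "h1 ?e \<in> harcs Z" "src Z (h1 ?e) = h0 ?y" "g1 (h1 ?e) = a" "tgt Z (h1 ?e) = h0 (tgt Y ?e)"
        using mh e lab[OF e(1)] unfolding morphism_def by auto
      have "he Z g1 (h0 ?y) a = h1 ?e" using he_eq[OF uZ e'(1,2,3)] .
      then have "h0 (walk Y f1 v (w @ [a])) = walk Z g1 (h0 v) (w @ [a])"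
        using e'(4) y(1) by (simp add: stepG_def)
      moreover have "walk Y f1 v (w @ [a]) \<in> nodes Y" using wfY e(1) unfolding wf_graph_def by (simp add: stepG_def)
      ultimately show ?thesis ..
    qed
    show ?thesis using iff rest by blast
  qed
qed

lemma cycle_det:
  assumes wfG: "wf_graph G" and uG: "uniq G l" and p1: "p \<ge> 1" and lV: "length V = p"
    and c: "(c0, c1) \<in> p_cycles p G" and lab: "\<And>i. i < p \<Longrightarrow> l (c1 (i, True)) = V ! i"
    and c': "(c0', c1') \<in> p_cycles p G" and lab': "\<And>i. i < p \<Longrightarrow> l (c1' (i, True)) = V ! i"
    and st: "c0 0 = c0' 0"
  shows "(c0, c1) = (c0', c1')"
proof -
  have m: "morphism (cyc p) G c0 c1" and m': "morphism (cyc p) G c0' c1'"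
    and ex: "c0 \<in> extensional {0..<p}" "c1 \<in> extensional ({0..<p} \<times> UNIV)"
    "c0' \<in> extensional {0..<p}" "c1' \<in> extensional ({0..<p} \<times> UNIV)"
    using c c' unfolding p_cycles_def by auto
  have n0: "c0 n = c0' n" if n: "n < p" for n
  proof -
    have "walk G l (c0 0) (take n V) = c0 n" using cyc_walk[OF uG m lV lab, of n] n by simp
    moreover have "walk G l (c0' 0) (take n V) = c0' n" using cyc_walk[OF uG m' lV lab', of n] n by simp
    ultimately show ?thesis using st by simp
  qed
  have mu: "\<forall>u\<in>harcs (cyc p). c1 u \<in> harcs G \<and> src G (c1 u) = c0 (src (cyc p) u) \<and> inv G (c1 u) = c1 (inv (cyc p) u)"
    using m unfolding morphism_def by blast
  have mu': "\<forall>u\<in>harcs (cyc p). c1' u \<in> harcs G \<and> src G (c1' u) = c0' (src (cyc p) u) \<and> inv G (c1' u) = c1' (inv (cyc p) u)"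
    using m' unfolding morphism_def by blast
  have nT: "c1 (n, True) = c1' (n, True)" if n: "n < p" for n
  proof -
    have a: "(n, True) \<in> harcs (cyc p)" using n by simp
    have "he G l (c0 n) (V ! n) = c1 (n, True)" using he_eq[OF uG] mu[rule_format, OF a] lab[OF n] by simp
    moreover have "he G l (c0' n) (V ! n) = c1' (n, True)" using he_eq[OF uG] mu'[rule_format, OF a] lab'[OF n] by simp
    ultimately show ?thesis using n0[OF n] by simp
  qed
  have n1: "c1 u = c1' u" if u: "u \<in> {0..<p} \<times> UNIV" for u
  proof -
    obtain n b where ub: "u = (n, b)" "n < p" using u by auto
    show ?thesis
    proof (cases b)
      case True then show ?thesis using nT ub by simp
    next
      case False
      have a: "(n, True) \<in> harcs (cyc p)" using ub by simp
      have "c1 (n, False) = inv G (c1 (n, True))" using mu[rule_format, OF a] by simp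
      moreover have "c1' (n, False) = inv G (c1' (n, True))" using mu'[rule_format, OF a] by simp
      ultimately show ?thesis using nT[OF ub(2)] ub False by simp
    qed
  qed
  have "c0 = c0'" using n0 ex(1,3) by (intro extensionalityI) auto
  moreover have "c1 = c1'" using n1 ex(2,4) by (intro extensionalityI) auto
  ultimately show ?thesis by simp
qed

context unf begin

lemma kkZ_phi0: "n < p \<Longrightarrow> fst (kk Z g1 z0) (phi0 n) = d0 n"
  using cycZ[of n] take_W_N[of n] unfolding kk_def phi0_def by simp

lemma kkZ_phi1: assumes u: "u \<in> harcs (cyc p)" shows "snd (kk Z g1 z0) (phi1 u) = d1 u"
proof -
  obtain n b where ub: "u = (n, b)" "n < p" using u by auto
  have m: "Suc n mod p < p" using p1 by simp
  note A = d1_props[OF ub(2)]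
  have H: "phi1 (n, b) \<in> H" using phi1_H[OF ub(2)] by (cases b) auto
  show ?thesis
  proof (cases b)
    case True
    have "he Z g1 (d0 n) (W ! n) = d1 (n, True)" using he_eq[OF uZ] A nthW[OF ub(2)] by simp
    then show ?thesis using H ub True cycZ[of n] unfolding kk_def by (simp add: phi1_def)
  next
    case False
    have "he Z g1 (d0 (Suc n mod p)) (inv X (W ! n)) = d1 (n, False)"
      by (rule he_eq[OF uZ]) (use A d1F_label[OF ub(2)] in auto)
    then show ?thesis using H ub False cycZ[of "Suc n mod p"] m unfolding kk_def by (simp add: phi1_def)
  qed
qed

end


context unf begin

lemma kY_lemma:
  fixes Y :: "('y, 'yh) ugraph" and f0 :: "'y \<Rightarrow> 'x" and f1 :: "'yh \<Rightarrow> 'xh" and h0 :: "'y \<Rightarrow> 'z" and h1 :: "'yh \<Rightarrow> 'zh"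
  assumes wfY: "wf_graph Y" and covY: "covering Y X f0 f1" and nlY: "\<not> has_loop Y"
    and covh: "covering Y Z h0 h1" and lab0: "\<And>v. v \<in> nodes Y \<Longrightarrow> g0 (h0 v) = f0 v"
    and lab1: "\<And>e. e \<in> harcs Y \<Longrightarrow> g1 (h1 e) = f1 e"
    and c: "(c0, c1) \<in> p_cycles p Y"
    and e0: "restrict (h0 \<circ> c0) {0..<p} = d0" and e1: "restrict (h1 \<circ> c1) ({0..<p} \<times> UNIV) = d1"
  shows "kk Y f1 (c0 0) \<in> homC U u0 last Y f0 f1 \<and> compose_with U h0 h1 (kk Y f1 (c0 0)) = kk Z g1 z0"
    "\<And>i. i < p \<Longrightarrow> f1 (c1 (i, True)) = W ! i"
proof -
  have m: "morphism (cyc p) Y c0 c1" using c unfolding p_cycles_def by auto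
  have uY: "uniq Y f1" using uniq_cov[OF wfY covY nlY] .
  have mh: "morphism Y Z h0 h1" using covh unfolding covering_def by blast
  have v0: "c0 0 \<in> nodes Y" using m p1 unfolding morphism_def by auto
  have hz: "h0 (c0 0) = z0" using e0 p1 unfolding z0_def by auto
  show lab: "\<And>i. i < p \<Longrightarrow> f1 (c1 (i, True)) = W ! i"
  proof -
    fix i assume i: "i < p"
    have "c1 (i, True) \<in> harcs Y" using m i unfolding morphism_def by auto
    then have "f1 (c1 (i, True)) = g1 (h1 (c1 (i, True)))" using lab1 by simp
    also have "\<dots> = g1 (d1 (i, True))" using e1 i by auto
    finally show "f1 (c1 (i, True)) = W ! i" using nthW[OF i] by simp
  qed
  have cw: "valid Y f1 (c0 0) W" "walk Y f1 (c0 0) W = c0 0" using cyc_walk[OF uY m lenW lab, of p] by auto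
  note LW = lift_walk[OF wfY wfZ covh nlZ uY uZ lab1 v0]
  have vN: "valid Y f1 (c0 0) L" if "L \<in> N" for L using LW[of L] N_valid[OF that] hz by simp
  have vH: "valid Z g1 z0 (L @ [a]) \<longleftrightarrow> valid Y f1 (c0 0) (L @ [a])" if "L \<in> N" for L a
    using LW[of "L @ [a]"] hz by simp
  have lv: "f0 (c0 0) = g0 z0" using lab0[OF v0] hz by simp
  have hom: "kk Y f1 (c0 0) \<in> homC U u0 last Y f0 f1" using kk_hom[OF wfY covY nlY v0 lv cw vN vH] .
  let ?k = "compose_with U h0 h1 (kk Y f1 (c0 0))"
  have "?k \<in> homC U u0 last Z g0 g1"
  proof -
    have hc: "covering U Y (fst (kk Y f1 (c0 0))) (snd (kk Y f1 (c0 0)))"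
      "\<And>v. v \<in> nodes U \<Longrightarrow> f0 (fst (kk Y f1 (c0 0)) v) = u0 v"
      "\<And>e. e \<in> harcs U \<Longrightarrow> f1 (snd (kk Y f1 (c0 0)) e) = last e"
      using hom unfolding homC_def by auto
    have mk: "morphism U Y (fst (kk Y f1 (c0 0))) (snd (kk Y f1 (c0 0)))" using hc(1) unfolding covering_def by blast
    have cov: "covering U Z (fst ?k) (snd ?k)"
      by (rule cov_trans[OF wf_U hc(1) covh]) (auto simp: compose_with_def)
    have l0: "g0 (fst ?k v) = u0 v" if "v \<in> nodes U" for v
      using that hc(2) lab0 mk unfolding morphism_def compose_with_def by auto
    have l1: "g1 (snd ?k e) = last e" if "e \<in> harcs U" for e
      using that hc(3) lab1 mk unfolding morphism_def compose_with_def by auto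
    show ?thesis unfolding homC_def using cov l0 l1
      by (auto simp: compose_with_def) 
  qed
  then have "?k = kk Z g1 (fst ?k [])" using hom_unique[OF wfZ covZ nlZ, of "fst ?k" "snd ?k"] by simp
  moreover have "fst ?k [] = z0" using Nil_N hz unfolding compose_with_def kk_def by simp
  ultimately show "kk Y f1 (c0 0) \<in> homC U u0 last Y f0 f1 \<and> compose_with U h0 h1 (kk Y f1 (c0 0)) = kk Z g1 z0"
    using hom by simp
qed

lemma surj_lemma:
  fixes Y :: "('y, 'yh) ugraph" and f0 :: "'y \<Rightarrow> 'x" and f1 :: "'yh \<Rightarrow> 'xh" and h0 :: "'y \<Rightarrow> 'z" and h1 :: "'yh \<Rightarrow> 'zh"
  assumes k: "(k0, k1) \<in> homC U u0 last Y f0 f1" and ck: "compose_with U h0 h1 (k0, k1) = kk Z g1 z0"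
  shows "\<exists>c0 c1. (c0, c1) \<in> nb_cycles p Y \<and> restrict (h0 \<circ> c0) {0..<p} = d0 \<and> restrict (h1 \<circ> c1) ({0..<p} \<times> UNIV) = d1"
proof -
  have mk: "morphism U Y k0 k1" using k unfolding homC_def covering_def by auto
  define c0 where "c0 = restrict (k0 \<circ> phi0) {0..<p}"
  define c1 where "c1 = restrict (k1 \<circ> phi1) ({0..<p} \<times> (UNIV :: bool set))"
  have mc: "morphism (cyc p) Y c0 c1" using morph_comp[OF wf_cyc[OF p1] phi_morph mk] unfolding c0_def c1_def by simp
  have dex: "d0 \<in> extensional {0..<p}" "d1 \<in> extensional ({0..<p} \<times> UNIV)" using dcyc unfolding nb_cycles_def p_cycles_def by auto
  have p0: "h0 (c0 n) = d0 n" if n: "n < p" for n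
  proof -
    have "h0 (c0 n) = fst (compose_with U h0 h1 (k0, k1)) (phi0 n)"
      using n take_W_N[OF n] unfolding c0_def compose_with_def phi0_def by simp
    also have "\<dots> = d0 n" using ck kkZ_phi0[OF n] by simp
    finally show ?thesis .
  qed
  have p1': "h1 (c1 u) = d1 u" if u: "u \<in> {0..<p} \<times> UNIV" for u
  proof -
    obtain n b where ub: "u = (n, b)" "n < p" using u by auto
    have H: "phi1 u \<in> H" using phi1_H[OF ub(2)] ub by (cases b) auto
    have "h1 (c1 u) = snd (compose_with U h0 h1 (k0, k1)) (phi1 u)"
      using u H unfolding c1_def compose_with_def by simp
    also have "\<dots> = d1 u" using ck kkZ_phi1 u by simp
    finally show ?thesis .
  qed
  have e0: "restrict (h0 \<circ> c0) {0..<p} = d0"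
  proof
    fix n show "restrict (h0 \<circ> c0) {0..<p} n = d0 n"
    proof (cases "n \<in> {0..<p}")
      case True then show ?thesis using p0 by simp
    next
      case False
      then have "d0 n = undefined" using dex(1) unfolding extensional_def by blast
      then show ?thesis using False by simp
    qed
  qed
  have e1: "restrict (h1 \<circ> c1) ({0..<p} \<times> UNIV) = d1"
  proof
    fix u show "restrict (h1 \<circ> c1) ({0..<p} \<times> UNIV) u = d1 u"
    proof (cases "u \<in> {0..<p} \<times> UNIV")
      case True then show ?thesis using p1' by simp
    next
      case False
      then have "d1 u = undefined" using dex(2) unfolding extensional_def by blast
      then show ?thesis using False by simp
    qed
  qed
  have nb: "\<not> backtracking p c1"
  proof
    assume "backtracking p c1"
    then obtain n where n: "n < p" "c1 (Suc n mod p, True) = c1 (n, False)" unfolding backtracking_def by blast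
    have "Suc n mod p < p" using p1 by simp
    then have "d1 (Suc n mod p, True) = d1 (n, False)" using p1'[of "(Suc n mod p, True)"] p1'[of "(n, False)"] n by simp
    then show False using dnb n unfolding backtracking_def by blast
  qed
  have "(c0, c1) \<in> nb_cycles p Y" unfolding nb_cycles_def p_cycles_def using mc nb
    by (auto simp: c0_def c1_def)
  then show ?thesis using e0 e1 by blast
qed

end

theorem proposition5p4:
  fixes X :: "('x, 'xh) ugraph"
    and Y :: "('y, 'yh) ugraph" and f0 :: "'y \<Rightarrow> 'x" and f1 :: "'yh \<Rightarrow> 'xh"
    and Z :: "('z, 'zh) ugraph" and g0 :: "'z \<Rightarrow> 'x" and g1 :: "'zh \<Rightarrow> 'xh"
    and h0 :: "'y \<Rightarrow> 'z" and h1 :: "'yh \<Rightarrow> 'zh"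
  assumes "wf_graph X"
    and "objC X Y f0 f1" and "objC X Z g0 g1"
    and "\<not> has_loop Y" and "\<not> has_loop Z"
    and "\<And>p. p \<ge> 1 \<Longrightarrow> finite (nb_cycles p Y)"
    and "\<And>p. p \<ge> 1 \<Longrightarrow> finite (nb_cycles p Z)"
    and "morC X Y f0 f1 Z g0 g1 h0 h1"
    and "weak_equiv X Y f0 f1 Z g0 g1 h0 h1"
  shows "ihara_zeta Y = ihara_zeta Z"
proof -
  note wfX = assms(1)
  have wfY: "wf_graph Y" and covY: "covering Y X f0 f1" using assms(2) unfolding objC_def by auto
  have wfZ: "wf_graph Z" and covZ: "covering Z X g0 g1" using assms(3) unfolding objC_def by auto
  note nlY = assms(4) and nlZ = assms(5)
  have covh: "covering Y Z h0 h1" and lab0: "\<And>v. v \<in> nodes Y \<Longrightarrow> g0 (h0 v) = f0 v"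
    and lab1: "\<And>e. e \<in> harcs Y \<Longrightarrow> g1 (h1 e) = f1 e" using assms(8) unfolding morC_def by auto
  have mh: "morphism Y Z h0 h1" using covh unfolding covering_def by blast
  have uY: "uniq Y f1" using uniq_cov[OF wfY covY nlY] .
  have uh: "uniq Y h1" using uniq_cov[OF wfY covh nlY] .
  have we: "\<And>p (U :: ('xh list, 'xh list) ugraph) u0 u1. p \<ge> 1 \<Longrightarrow> in_R p X U u0 u1 \<Longrightarrow>
        bij_betw (compose_with U h0 h1) (homC U u0 u1 Y f0 f1) (homC U u0 u1 Z g0 g1)"
    using assms(9) unfolding weak_equiv_def by blast
  have key: "cnum Y p = cnum Z p" if p1: "p \<ge> 1" for p
  proof -
    define Phi where "Phi c = (restrict (h0 \<circ> fst c) {0..<p}, restrict (h1 \<circ> snd c) ({0..<p} \<times> (UNIV :: bool set)))"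
      for c :: "(nat \<Rightarrow> 'y) \<times> (nat \<times> bool \<Rightarrow> 'yh)"
    have into: "Phi c \<in> nb_cycles p Z" if c: "c \<in> nb_cycles p Y" for c
    proof -
      obtain c0 c1 where cc: "c = (c0, c1)" by (cases c)
      have m: "morphism (cyc p) Y c0 c1" and nb: "\<not> backtracking p c1"
        using c cc unfolding nb_cycles_def p_cycles_def by auto
      have mc: "morphism (cyc p) Z (restrict (h0 \<circ> c0) {0..<p}) (restrict (h1 \<circ> c1) ({0..<p} \<times> UNIV))"
        using morph_comp[OF wf_cyc[OF p1] m mh] by simp
      have nb2: "\<not> backtracking p (restrict (h1 \<circ> c1) ({0..<p} \<times> UNIV))"
      proof
        assume "backtracking p (restrict (h1 \<circ> c1) ({0..<p} \<times> UNIV))"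
        then obtain n where n: "n < p" "restrict (h1 \<circ> c1) ({0..<p} \<times> UNIV) (Suc n mod p, True) = restrict (h1 \<circ> c1) ({0..<p} \<times> UNIV) (n, False)"
          unfolding backtracking_def by blast
        have sn: "Suc n mod p < p" using p1 by simp
        have eq: "h1 (c1 (Suc n mod p, True)) = h1 (c1 (n, False))" using n sn by simp
        have a: "(Suc n mod p, True) \<in> harcs (cyc p)" "(n, False) \<in> harcs (cyc p)" using n sn by auto
        have hh: "c1 (Suc n mod p, True) \<in> harcs Y" "c1 (n, False) \<in> harcs Y"
          "src Y (c1 (Suc n mod p, True)) = c0 (Suc n mod p)" "src Y (c1 (n, False)) = c0 (Suc n mod p)"
          using m a unfolding morphism_def by auto
        have uh': "\<forall>e1\<in>harcs Y. \<forall>e2\<in>harcs Y. src Y e1 = src Y e2 \<longrightarrow> h1 e1 = h1 e2 \<longrightarrow> e1 = e2"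
          using uh unfolding uniq_def .
        have "c1 (Suc n mod p, True) = c1 (n, False)" using bspec[OF bspec[OF uh' hh(1)] hh(2)] hh(3,4) eq by simp
        then show False using nb n unfolding backtracking_def by blast
      qed
      show ?thesis unfolding Phi_def cc nb_cycles_def p_cycles_def using mc nb2 by auto
    qed
    have inj: "inj_on Phi (nb_cycles p Y)"
    proof (rule inj_onI)
      fix c c' assume c: "c \<in> nb_cycles p Y" and c': "c' \<in> nb_cycles p Y" and eq: "Phi c = Phi c'"
      obtain c0 c1 where cc: "c = (c0, c1)" by (cases c)
      obtain c0' c1' where cc': "c' = (c0', c1')" by (cases c')
      obtain d0 d1 where dd: "Phi c = (d0, d1)" by (cases "Phi c")
      have dn: "(d0, d1) \<in> nb_cycles p Z" using into[OF c] dd by simp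
      interpret I: unf X Z g0 g1 p d0 d1
        by (unfold_locales) (use wfX assms(3) nlZ p1 dn in auto)
      have cp: "(c0, c1) \<in> p_cycles p Y" "(c0', c1') \<in> p_cycles p Y" using c c' cc cc' unfolding nb_cycles_def by auto
      have e: "restrict (h0 \<circ> c0) {0..<p} = d0" "restrict (h1 \<circ> c1) ({0..<p} \<times> UNIV) = d1"
        using dd cc unfolding Phi_def by auto
      have e': "restrict (h0 \<circ> c0') {0..<p} = d0" "restrict (h1 \<circ> c1') ({0..<p} \<times> UNIV) = d1"
        using dd eq cc' unfolding Phi_def by auto
      note K = I.kY_lemma[OF wfY covY nlY covh lab0 lab1 cp(1) e]
      note K' = I.kY_lemma[OF wfY covY nlY covh lab0 lab1 cp(2) e']
      have bij: "bij_betw (compose_with I.U h0 h1) (homC I.U I.u0 last Y f0 f1) (homC I.U I.u0 last Z g0 g1)"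
        using we[OF p1 I.in_R_U] .
      have ceq: "compose_with I.U h0 h1 (I.kk Y f1 (c0 0)) = compose_with I.U h0 h1 (I.kk Y f1 (c0' 0))"
        using K(1) K'(1) by simp
      have "I.kk Y f1 (c0 0) = I.kk Y f1 (c0' 0)"
        using inj_onD[OF bij_betw_imp_inj_on[OF bij] ceq] K(1) K'(1) by blast
      moreover have "fst (I.kk Y f1 v) [] = v" for v using I.Nil_N unfolding I.kk_def by simp
      ultimately have "c0 0 = c0' 0" by metis
      then have "(c0, c1) = (c0', c1')" using cycle_det[OF wfY uY p1 I.lenW cp(1) K(2) cp(2) K'(2)] by blast
      then show "c = c'" using cc cc' by simp
    qed
    have surj: "nb_cycles p Z \<subseteq> Phi ` nb_cycles p Y"
    proof
      fix d assume dn: "d \<in> nb_cycles p Z"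
      obtain d0 d1 where dd: "d = (d0, d1)" by (cases d)
      interpret I: unf X Z g0 g1 p d0 d1
        by (unfold_locales) (use wfX assms(3) nlZ p1 dn dd in auto)
      have bij: "bij_betw (compose_with I.U h0 h1) (homC I.U I.u0 last Y f0 f1) (homC I.U I.u0 last Z g0 g1)"
        using we[OF p1 I.in_R_U] .
      have "I.kk Z g1 I.z0 \<in> compose_with I.U h0 h1 ` homC I.U I.u0 last Y f0 f1"
        using bij I.kkZ unfolding bij_betw_def by simp
      then obtain k where k: "k \<in> homC I.U I.u0 last Y f0 f1" "compose_with I.U h0 h1 k = I.kk Z g1 I.z0"
        by (auto simp del: compose_with_def)
      obtain k0 k1 where kk: "k = (k0, k1)" by (cases k)
      obtain c0 c1 where c: "(c0, c1) \<in> nb_cycles p Y" "restrict (h0 \<circ> c0) {0..<p} = d0"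
        "restrict (h1 \<circ> c1) ({0..<p} \<times> UNIV) = d1"
        using I.surj_lemma[of k0 k1 Y f0 f1 h0 h1] k kk by auto
      have "Phi (c0, c1) = d" using c dd unfolding Phi_def by simp
      then show "d \<in> Phi ` nb_cycles p Y" using c(1) by (intro image_eqI[of _ _ "(c0, c1)"]) simp_all
    qed
    have "bij_betw Phi (nb_cycles p Y) (nb_cycles p Z)"
      unfolding bij_betw_def using inj into surj by blast
    then show ?thesis unfolding cnum_def by (rule bij_betw_same_card)
  qed
  have "Abs_fps (\<lambda>p. if p = 0 then 0 else of_nat (cnum Y p) / of_nat p :: real)
      = Abs_fps (\<lambda>p. if p = 0 then 0 else of_nat (cnum Z p) / of_nat p)"
    using key by (intro arg_cong[where f = Abs_fps] ext) simp
  then show ?thesis unfolding ihara_zeta_def by simp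
qed


end
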